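(* Let $\phi=\phi_{\underline\alpha}$ be a completely positive map in $\mathcal J_1$ given in Kraus form by $\underline\alpha=\{\alpha_i\}_{i\in\mathbb N}\subset\mathcal B(\mathcal H)$, and let $\mathcal A(\underline\alpha)$ be the (non-$\star$) algebra generated by the $\alpha_i^\star$ (including the identity). Then $\phi$ is ergodic if and only if every nonzero $x\in\mathcal H$ is cyclic for $\mathcal A(\underline\alpha)$, i.e. the closure of $\mathcal A(\underline\alpha)x$ is $\mathcal H$.
   Context: Let $\mathcal H$ be a complex separable Hilbert space, $\mathcal B(\mathcal H)$ the bounded operators, $\mathbb I$ the identity, and $\mathcal J_1$ the trace-class operators with norm $\|A\|_1=\operatorname{tr}|A|$, $|A|=(A^\star A)^{1/2}$. For self-adjoint $A$, $A\ge 0$ means $\langle x,Ax\rangle\ge 0$ for all $x$, and $A>0$ means $\langle x,Ax\rangle>0$ for all $x\ne0$. $\mathcal C_1=\{A\in\mathcal J_1:A\ge0\}$. A positive map in $\mathcal J_1$ is a linear map $\phi:\mathcal J_1\to\mathcal J_1$ with $\phi(\mathcal C_1)\subseteq\mathcal C_1$ (it is automatically bounded); it is $n$-positive if $\phi\otimes\mathrm{id}_{M_n}$ maps positive $n\times n$ operator matrices with entries in $\mathcal J_1$ to positive ones, and completely positive if it is $n$-positive for all $n$. Kraus form: given $\underline\alpha=\{\alpha_i\}_{i\in\mathbb N}\subset\mathcal B(\mathcal H)$ with $\sum_{i\in K}\alpha_i^\star\alpha_i\le c\,\mathbb I$ for all finite $K\subset\mathbb N$, $\phi_{\underline\alpha}(A)=\sum_i\alpha_iA\alpha_i^\star$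 (limit of finite partial sums). With $\exp(t\phi)=\sum_n t^n\phi^n/n!$, $\phi$ is ergodic if for every $A\in\mathcal C_1$, $A\ne0$, there is $t_A>0$ with $(\exp t_A\phi)(A)>0$. *)

theory Defs
  imports Complex_Main
begin

text \<open>A complex separable Hilbert space is modelled (up to unitary equivalence) as
  ell^2(I) for an index set I of natural numbers: square-summable sequences
  nat => complex vanishing outside I.  Bounded operators are functions on
  nat => complex, only their values on ell^2(I) being relevant.\<close>

type_synonym vec = "nat \<Rightarrow> complex"
type_synonym op = "vec \<Rightarrow> vec"

definition l2 :: "nat set \<Rightarrow> vec set" where
  "l2 I = {x. (\<forall>n. n \<notin> I \<longrightarrow> x n = 0) \<and> summable (\<lambda>n. (cmod (x n))\<^sup>2)}"

definition inner_l2 :: "vec \<Rightarrow> vec \<Rightarrow> complex" where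
  "inner_l2 x y = (\<Sum>n. cnj (x n) * y n)"

definition norm_l2 :: "vec \<Rightarrow> real" where
  "norm_l2 x = sqrt (\<Sum>n. (cmod (x n))\<^sup>2)"

definition ket :: "nat \<Rightarrow> vec" where
  "ket k = (\<lambda>n. if n = k then 1 else 0)"

definition bounded_op :: "nat set \<Rightarrow> op \<Rightarrow> bool" where
  "bounded_op I T \<longleftrightarrow>
     (\<forall>x\<in>l2 I. T x \<in> l2 I) \<and>
     (\<forall>x\<in>l2 I. \<forall>y\<in>l2 I. \<forall>a b. T (\<lambda>n. a * x n + b * y n) = (\<lambda>n. a * T x n + b * T y n)) \<and>
     (\<exists>C. \<forall>x\<in>l2 I. norm_l2 (T x) \<le> C * norm_l2 x)"

definition adj :: "nat set \<Rightarrow> op \<Rightarrow> op" where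
  "adj I T = (\<lambda>x m. if m \<in> I then inner_l2 (T (ket m)) x else 0)"

definition positive_op :: "nat set \<Rightarrow> op \<Rightarrow> bool" where
  "positive_op I A \<longleftrightarrow>
     (\<forall>x\<in>l2 I. inner_l2 x (A x) \<in> \<real> \<and> 0 \<le> Re (inner_l2 x (A x)))"

definition strictly_positive_op :: "nat set \<Rightarrow> op \<Rightarrow> bool" where
  "strictly_positive_op I A \<longleftrightarrow>
     (\<forall>x\<in>l2 I. x \<noteq> (\<lambda>n. 0) \<longrightarrow> inner_l2 x (A x) \<in> \<real> \<and> 0 < Re (inner_l2 x (A x)))"

text \<open>The cone C_1 of positive trace-class operators: for A >= 0 one has |A| = A,
  so tr|A| = sum over the basis e_n (n in I) of <e_n, A e_n>.\<close>
definition C1 :: "nat set \<Rightarrow> op \<Rightarrow> bool" where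
  "C1 I A \<longleftrightarrow> bounded_op I A \<and> positive_op I A \<and>
     summable (\<lambda>n. if n \<in> I then Re (inner_l2 (ket n) (A (ket n))) else 0)"

definition op_lim :: "nat set \<Rightarrow> (nat \<Rightarrow> op) \<Rightarrow> op" where
  "op_lim I S = (\<lambda>x. THE y. y \<in> l2 I \<and> (\<lambda>N. norm_l2 (\<lambda>n. S N x n - y n)) \<longlonglongrightarrow> 0)"

definition kraus :: "nat set \<Rightarrow> (nat \<Rightarrow> op) \<Rightarrow> op \<Rightarrow> op" where
  "kraus I \<alpha> A = op_lim I (\<lambda>N x n. \<Sum>i<N. \<alpha> i (A (adj I (\<alpha> i) x)) n)"

definition exp_kraus :: "nat set \<Rightarrow> (nat \<Rightarrow> op) \<Rightarrow> real \<Rightarrow> op \<Rightarrow> op" where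
  "exp_kraus I \<alpha> t A =
     op_lim I (\<lambda>N x n. \<Sum>k<N. complex_of_real (t ^ k / fact k) * ((kraus I \<alpha> ^^ k) A) x n)"

definition ergodic :: "nat set \<Rightarrow> (nat \<Rightarrow> op) \<Rightarrow> bool" where
  "ergodic I \<alpha> \<longleftrightarrow>
     (\<forall>A. C1 I A \<and> (\<exists>x\<in>l2 I. A x \<noteq> (\<lambda>n. 0)) \<longrightarrow>
        (\<exists>t>0. strictly_positive_op I (exp_kraus I \<alpha> t A)))"

inductive_set gen_alg :: "nat set \<Rightarrow> (nat \<Rightarrow> op) \<Rightarrow> op set" for I \<alpha> where
  alg_id: "id \<in> gen_alg I \<alpha>"
| alg_gen: "adj I (\<alpha> i) \<in> gen_alg I \<alpha>"
| alg_add: "a \<in> gen_alg I \<alpha> \<Longrightarrow> b \<in> gen_alg I \<alpha> \<Longrightarrow> (\<lambda>x n. a x n + b x n) \<in> gen_alg I \<alpha>"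
| alg_scale: "a \<in> gen_alg I \<alpha> \<Longrightarrow> (\<lambda>x n. c * a x n) \<in> gen_alg I \<alpha>"
| alg_mult: "a \<in> gen_alg I \<alpha> \<Longrightarrow> b \<in> gen_alg I \<alpha> \<Longrightarrow> a \<circ> b \<in> gen_alg I \<alpha>"

definition cyclic :: "nat set \<Rightarrow> (nat \<Rightarrow> op) \<Rightarrow> vec \<Rightarrow> bool" where
  "cyclic I \<alpha> x \<longleftrightarrow>
     (\<forall>y\<in>l2 I. \<forall>\<epsilon>>0. \<exists>a\<in>gen_alg I \<alpha>. norm_l2 (\<lambda>n. a x n - y n) < \<epsilon>)"

end

theory Submission
  imports Defs "HOL-Analysis.Analysis"
begin


lemma sq_summable_add:
  assumes "summable (\<lambda>n. (cmod (x n))\<^sup>2)" "summable (\<lambda>n. (cmod (y n))\<^sup>2)"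
  shows "summable (\<lambda>n. (cmod (x n + y n))\<^sup>2)"
proof (rule summable_comparison_test'[where g="\<lambda>n. 2*(cmod (x n))\<^sup>2 + 2*(cmod (y n))\<^sup>2" and N=0])
  show "summable (\<lambda>n. 2*(cmod (x n))\<^sup>2 + 2*(cmod (y n))\<^sup>2)"
    using assms by (intro summable_add summable_mult) auto
  fix n
  have "cmod (x n + y n) \<le> cmod (x n) + cmod (y n)" by (rule norm_triangle_ineq)
  hence "(cmod (x n + y n))\<^sup>2 \<le> (cmod (x n) + cmod (y n))\<^sup>2"
    by (simp add: power_mono)
  also have "\<dots> \<le> 2*(cmod (x n))\<^sup>2 + 2*(cmod (y n))\<^sup>2"
  proof -
    have "2*(cmod (x n))\<^sup>2 + 2*(cmod (y n))\<^sup>2 - (cmod (x n) + cmod (y n))\<^sup>2 = (cmod (x n) - cmod (y n))\<^sup>2"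
      by (simp add: power2_eq_square algebra_simps)
    thus ?thesis using zero_le_power2[of "cmod (x n) - cmod (y n)"] by linarith
  qed
  finally show "norm ((cmod (x n + y n))\<^sup>2) \<le> 2*(cmod (x n))\<^sup>2 + 2*(cmod (y n))\<^sup>2" by simp
qed

lemma sq_summable_prod:
  assumes "summable (\<lambda>n. (cmod (x n))\<^sup>2)" "summable (\<lambda>n. (cmod (y n))\<^sup>2)"
  shows "summable (\<lambda>n. cnj (x n) * y n)"
proof (rule summable_comparison_test'[where g="\<lambda>n. (cmod (x n))\<^sup>2 + (cmod (y n))\<^sup>2" and N=0])
  show "summable (\<lambda>n. (cmod (x n))\<^sup>2 + (cmod (y n))\<^sup>2)"
    using assms by (intro summable_add) auto
  fix n
  have "cmod (x n) * cmod (y n) \<le> (cmod (x n))\<^sup>2 + (cmod (y n))\<^sup>2"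
  proof -
    have "(cmod (x n))\<^sup>2 + (cmod (y n))\<^sup>2 - 2 * (cmod (x n) * cmod (y n)) = (cmod (x n) - cmod (y n))\<^sup>2"
      by (simp add: power2_eq_square algebra_simps)
    thus ?thesis using zero_le_power2[of "cmod (x n) - cmod (y n)"] mult_nonneg_nonneg[OF norm_ge_zero norm_ge_zero, of "x n" "y n"] by linarith
  qed
  thus "norm (cnj (x n) * y n) \<le> (cmod (x n))\<^sup>2 + (cmod (y n))\<^sup>2"
    by (simp add: norm_mult)
qed

lemma suminf_cnj: "summable f \<Longrightarrow> (\<Sum>n. cnj (f n)) = cnj (suminf f)"
  by (metis sums_cnj summable_sums sums_unique)

typedef ell2 = "{x::nat\<Rightarrow>complex. summable (\<lambda>n. (cmod (x n))\<^sup>2)}"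
  morphisms vec_of mk_ell2
  by (rule exI[of _ "\<lambda>_. 0"]) simp

setup_lifting type_definition_ell2

instantiation ell2 :: real_inner
begin
lift_definition zero_ell2 :: ell2 is "\<lambda>n. 0" by simp
lift_definition plus_ell2 :: "ell2 \<Rightarrow> ell2 \<Rightarrow> ell2" is "\<lambda>x y n. x n + y n"
  by (rule sq_summable_add)
lift_definition uminus_ell2 :: "ell2 \<Rightarrow> ell2" is "\<lambda>x n. - x n" by simp
lift_definition minus_ell2 :: "ell2 \<Rightarrow> ell2 \<Rightarrow> ell2" is "\<lambda>x y n. x n - y n"
proof -
  fix x y :: "nat \<Rightarrow> complex"
  assume "summable (\<lambda>n. (cmod (x n))\<^sup>2)" "summable (\<lambda>n. (cmod (y n))\<^sup>2)"
  then have "summable (\<lambda>n. (cmod (x n + - y n))\<^sup>2)" by (intro sq_summable_add) auto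
  then show "summable (\<lambda>n. (cmod (x n - y n))\<^sup>2)" by simp
qed
lift_definition scaleR_ell2 :: "real \<Rightarrow> ell2 \<Rightarrow> ell2" is "\<lambda>r x n. complex_of_real r * x n"
proof -
  fix r :: real and x :: "nat \<Rightarrow> complex"
  assume "summable (\<lambda>n. (cmod (x n))\<^sup>2)"
  then have "summable (\<lambda>n. r\<^sup>2 * (cmod (x n))\<^sup>2)" by (rule summable_mult)
  then show "summable (\<lambda>n. (cmod (complex_of_real r * x n))\<^sup>2)"
    by (simp add: norm_mult power_mult_distrib)
qed
lift_definition norm_ell2 :: "ell2 \<Rightarrow> real" is "\<lambda>x. sqrt (\<Sum>n. (cmod (x n))\<^sup>2)" .
lift_definition inner_ell2 :: "ell2 \<Rightarrow> ell2 \<Rightarrow> real" is "\<lambda>x y. Re (\<Sum>n. cnj (x n) * y n)" .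
definition dist_ell2 :: "ell2 \<Rightarrow> ell2 \<Rightarrow> real" where "dist_ell2 x y = norm (x - y)"
definition sgn_ell2 :: "ell2 \<Rightarrow> ell2" where "sgn_ell2 x = inverse (norm x) *\<^sub>R x"
definition uniformity_ell2 :: "(ell2 \<times> ell2) filter" where
  "uniformity_ell2 = (INF e\<in>{0 <..}. principal {(x, y). dist x y < e})"
definition open_ell2 :: "ell2 set \<Rightarrow> bool" where
  "open_ell2 U \<longleftrightarrow> (\<forall>x\<in>U. eventually (\<lambda>(x', y). x' = x \<longrightarrow> y \<in> U) uniformity)"

instance
proof
  fix x y z :: ell2 and a b :: real
  show "x + y + z = x + (y + z)" by transfer (simp add: add.assoc)
  show "x + y = y + x" by transfer (simp add: add.commute)
  show "0 + x = x" by transfer simp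
  show "- x + x = 0" by transfer simp
  show "x - y = x + - y" by transfer simp
  show "a *\<^sub>R (x + y) = a *\<^sub>R x + a *\<^sub>R y" by transfer (simp add: distrib_left)
  show "(a + b) *\<^sub>R x = a *\<^sub>R x + b *\<^sub>R x" by transfer (simp add: distrib_right)
  show "a *\<^sub>R b *\<^sub>R x = (a * b) *\<^sub>R x" by transfer (simp add: mult.assoc)
  show "1 *\<^sub>R x = x" by transfer simp
  show "sgn x = inverse (norm x) *\<^sub>R x" by (rule sgn_ell2_def)
  show "dist x y = norm (x - y)" by (rule dist_ell2_def)
  show "(uniformity :: (ell2 \<times> ell2) filter) = (INF e\<in>{0 <..}. principal {(x, y). dist x y < e})"
    by (rule uniformity_ell2_def)
  show "open U = (\<forall>x\<in>U. \<forall>\<^sub>F (x', y) in uniformity. x' = x \<longrightarrow> y \<in> U)" for U :: "ell2 set"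
    by (rule open_ell2_def)
  show "inner x y = inner y x"
  proof transfer
    fix x y :: "nat \<Rightarrow> complex"
    assume x: "summable (\<lambda>n. (cmod (x n))\<^sup>2)" and y: "summable (\<lambda>n. (cmod (y n))\<^sup>2)"
    have "(\<Sum>n. cnj (y n) * x n) = cnj (\<Sum>n. cnj (x n) * y n)"
      using suminf_cnj[OF sq_summable_prod[OF x y]] by (simp add: mult.commute)
    then show "Re (\<Sum>n. cnj (x n) * y n) = Re (\<Sum>n. cnj (y n) * x n)" by simp
  qed
  show "inner (x + y) z = inner x z + inner y z"
  proof transfer
    fix x y z :: "nat \<Rightarrow> complex"
    assume x: "summable (\<lambda>n. (cmod (x n))\<^sup>2)" and y: "summable (\<lambda>n. (cmod (y n))\<^sup>2)"
      and z: "summable (\<lambda>n. (cmod (z n))\<^sup>2)"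
    have "(\<Sum>n. cnj (x n + y n) * z n) = (\<Sum>n. cnj (x n) * z n + cnj (y n) * z n)"
      by (simp add: distrib_right)
    also have "\<dots> = (\<Sum>n. cnj (x n) * z n) + (\<Sum>n. cnj (y n) * z n)"
      using sq_summable_prod[OF x z] sq_summable_prod[OF y z] by (rule suminf_add[symmetric])
    finally show "Re (\<Sum>n. cnj (x n + y n) * z n) = Re (\<Sum>n. cnj (x n) * z n) + Re (\<Sum>n. cnj (y n) * z n)"
      by simp
  qed
  show "inner (a *\<^sub>R x) y = a * inner x y"
  proof transfer
    fix x y :: "nat \<Rightarrow> complex" and a :: real
    assume x: "summable (\<lambda>n. (cmod (x n))\<^sup>2)" and y: "summable (\<lambda>n. (cmod (y n))\<^sup>2)"
    have "(\<Sum>n. cnj (complex_of_real a * x n) * y n) = (\<Sum>n. complex_of_real a * (cnj (x n) * y n))"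
      by (simp add: mult.assoc)
    also have "\<dots> = complex_of_real a * (\<Sum>n. cnj (x n) * y n)"
      using sq_summable_prod[OF x y] by (simp add: suminf_mult)
    finally show "Re (\<Sum>n. cnj (complex_of_real a * x n) * y n) = a * Re (\<Sum>n. cnj (x n) * y n)"
      by simp
  qed
  have sq: "cnj c * c = complex_of_real ((cmod c)\<^sup>2)" for c :: complex
    using complex_norm_square[of c] by (simp add: mult.commute)
  show "0 \<le> inner x x"
  proof transfer
    fix x :: "nat \<Rightarrow> complex"
    assume x: "summable (\<lambda>n. (cmod (x n))\<^sup>2)"
    have "(\<Sum>n. cnj (x n) * x n) = (\<Sum>n. complex_of_real ((cmod (x n))\<^sup>2))" by (simp add: sq)
    also have "\<dots> = complex_of_real (\<Sum>n. (cmod (x n))\<^sup>2)"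
      using x by (rule suminf_of_real[symmetric])
    finally show "0 \<le> Re (\<Sum>n. cnj (x n) * x n)" by (simp add: suminf_nonneg x)
  qed
  show "(inner x x = 0) = (x = 0)"
  proof transfer
    fix x :: "nat \<Rightarrow> complex"
    assume x: "summable (\<lambda>n. (cmod (x n))\<^sup>2)"
    have "(\<Sum>n. cnj (x n) * x n) = (\<Sum>n. complex_of_real ((cmod (x n))\<^sup>2))" by (simp add: sq)
    also have "\<dots> = complex_of_real (\<Sum>n. (cmod (x n))\<^sup>2)"
      using x by (rule suminf_of_real[symmetric])
    finally have e: "Re (\<Sum>n. cnj (x n) * x n) = (\<Sum>n. (cmod (x n))\<^sup>2)" by simp
    show "(Re (\<Sum>n. cnj (x n) * x n) = 0) = (x = (\<lambda>n. 0))"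
      unfolding e using suminf_eq_zero_iff[OF x] by (auto simp: fun_eq_iff)
  qed
  show "norm x = sqrt (inner x x)"
  proof transfer
    fix x :: "nat \<Rightarrow> complex"
    assume x: "summable (\<lambda>n. (cmod (x n))\<^sup>2)"
    have "(\<Sum>n. cnj (x n) * x n) = (\<Sum>n. complex_of_real ((cmod (x n))\<^sup>2))" by (simp add: sq)
    also have "\<dots> = complex_of_real (\<Sum>n. (cmod (x n))\<^sup>2)"
      using x by (rule suminf_of_real[symmetric])
    finally show "sqrt (\<Sum>n. (cmod (x n))\<^sup>2) = sqrt (Re (\<Sum>n. cnj (x n) * x n))" by simp
  qed
qed
end


lemma sq_summ [simp]: "summable (\<lambda>n. (cmod (vec_of x n))\<^sup>2)"
  using vec_of by auto

lemma vec_of_zero [simp]: "vec_of 0 = (\<lambda>n. 0)" by transfer simp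
lemma vec_of_add [simp]: "vec_of (x + y) n = vec_of x n + vec_of y n" by transfer simp
lemma vec_of_diff [simp]: "vec_of (x - y) n = vec_of x n - vec_of y n" by transfer simp
lemma vec_of_minus [simp]: "vec_of (- x) n = - vec_of x n" by transfer simp
lemma vec_of_scaleR [simp]: "vec_of (r *\<^sub>R x) n = complex_of_real r * vec_of x n" by transfer simp

lemma vec_of_sum [simp]: "vec_of (sum f A) n = (\<Sum>a\<in>A. vec_of (f a) n)"
  by (induction A rule: infinite_finite_induct) auto

lemma norm_sq_ell2: "(norm x)\<^sup>2 = (\<Sum>n. (cmod (vec_of x n))\<^sup>2)"
  by transfer (simp add: suminf_nonneg)

lemma ell2_eqI: "(\<And>n. vec_of x n = vec_of y n) \<Longrightarrow> x = y"
  by (metis ext vec_of_inject)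

lemma partial_le_norm: "(\<Sum>n\<in>F. (cmod (vec_of x n))\<^sup>2) \<le> (norm x)\<^sup>2" if "finite F"
  unfolding norm_sq_ell2 by (rule sum_le_suminf) (use that in auto)

lemma coord_le_norm: "cmod (vec_of x m) \<le> norm x"
proof -
  have "(cmod (vec_of x m))\<^sup>2 \<le> (norm x)\<^sup>2" using partial_le_norm[of "{m}" x] by simp
  thus ?thesis by (meson norm_ge_zero power2_le_imp_le)
qed

lemma tendsto_coord: "(X \<longlongrightarrow> L) F \<Longrightarrow> ((\<lambda>k. vec_of (X k) m) \<longlongrightarrow> vec_of L m) F"
proof -
  assume "(X \<longlongrightarrow> L) F"
  hence "((\<lambda>k. norm (X k - L)) \<longlongrightarrow> 0) F" by (simp add: tendsto_norm_zero_iff LIM_zero)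
  hence "((\<lambda>k. vec_of (X k) m - vec_of L m) \<longlongrightarrow> 0) F"
    by (rule tendsto_0_le[where K=1]) (auto intro!: always_eventually simp: coord_le_norm[of "_ - L", simplified])
  thus ?thesis by (simp add: LIM_zero_iff)
qed

instance ell2 :: complete_space
proof
  fix X :: "nat \<Rightarrow> ell2"
  assume C: "Cauchy X"
  have Cm: "Cauchy (\<lambda>k. vec_of (X k) m)" for m
  proof (rule metric_CauchyI)
    fix e :: real assume "0 < e"
    then obtain N where N: "\<forall>i\<ge>N. \<forall>j\<ge>N. dist (X i) (X j) < e" using C metric_CauchyD by blast
    show "\<exists>M. \<forall>i\<ge>M. \<forall>j\<ge>M. dist (vec_of (X i) m) (vec_of (X j) m) < e"
    proof (intro exI allI impI)
      fix i j assume "N \<le> i" "N \<le> j"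
      then have "dist (X i) (X j) < e" using N by blast
      moreover have "dist (vec_of (X i) m) (vec_of (X j) m) \<le> dist (X i) (X j)"
        using coord_le_norm[of "X i - X j" m] by (simp add: dist_norm)
      ultimately show "dist (vec_of (X i) m) (vec_of (X j) m) < e" by linarith
    qed
  qed
  define L where "L m = lim (\<lambda>k. vec_of (X k) m)" for m
  have L: "(\<lambda>k. vec_of (X k) m) \<longlonglongrightarrow> L m" for m
    unfolding L_def using Cm convergent_LIMSEQ_iff Cauchy_convergent_iff by blast
  have key: "\<exists>N. \<forall>k\<ge>N. summable (\<lambda>m. (cmod (L m - vec_of (X k) m))\<^sup>2) \<and>
                (\<Sum>m. (cmod (L m - vec_of (X k) m))\<^sup>2) \<le> e\<^sup>2" if e: "e > 0" for e
  proof -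
    obtain N where N: "\<forall>i\<ge>N. \<forall>j\<ge>N. dist (X i) (X j) < e" using C metric_CauchyD e by blast
    have fin: "(\<Sum>m<M. (cmod (L m - vec_of (X k) m))\<^sup>2) \<le> e\<^sup>2" if k: "k \<ge> N" for k M
    proof (rule LIMSEQ_le_const2)
      show "(\<lambda>j. \<Sum>m<M. (cmod (vec_of (X j) m - vec_of (X k) m))\<^sup>2) \<longlonglongrightarrow> (\<Sum>m<M. (cmod (L m - vec_of (X k) m))\<^sup>2)"
        by (intro tendsto_intros L)
      show "\<exists>N'. \<forall>j\<ge>N'. (\<Sum>m<M. (cmod (vec_of (X j) m - vec_of (X k) m))\<^sup>2) \<le> e\<^sup>2"
      proof (intro exI allI impI)
        fix j assume "N \<le> j"
        hence d: "norm (X j - X k) < e" using N k by (simp add: dist_norm)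
        have "(\<Sum>m<M. (cmod (vec_of (X j) m - vec_of (X k) m))\<^sup>2) \<le> (norm (X j - X k))\<^sup>2"
          using partial_le_norm[of "{..<M}" "X j - X k"] by simp
        also have "\<dots> \<le> e\<^sup>2" using d by (intro power_mono) auto
        finally show "(\<Sum>m<M. (cmod (vec_of (X j) m - vec_of (X k) m))\<^sup>2) \<le> e\<^sup>2" .
      qed
    qed
    show ?thesis
    proof (intro exI allI impI conjI)
      fix k assume k: "N \<le> k"
      show s: "summable (\<lambda>m. (cmod (L m - vec_of (X k) m))\<^sup>2)"
        by (rule summableI_nonneg_bounded[where x="e\<^sup>2"]) (use fin[OF k] in auto)
      show "(\<Sum>m. (cmod (L m - vec_of (X k) m))\<^sup>2) \<le> e\<^sup>2"
        by (rule suminf_le_const[OF s]) (use fin[OF k] in auto)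
    qed
  qed
  obtain N0 where N0: "\<forall>k\<ge>N0. summable (\<lambda>m. (cmod (L m - vec_of (X k) m))\<^sup>2)"
    using key[of 1] by auto
  have "summable (\<lambda>m. (cmod ((L m - vec_of (X N0) m) + vec_of (X N0) m))\<^sup>2)"
    using N0 by (intro sq_summable_add) auto
  hence Ls: "summable (\<lambda>m. (cmod (L m))\<^sup>2)" by simp
  define Lv where "Lv = mk_ell2 L"
  have vL: "vec_of Lv = L" unfolding Lv_def using Ls by (simp add: mk_ell2_inverse)
  have "X \<longlonglongrightarrow> Lv"
  proof (rule LIMSEQ_I)
    fix r :: real assume r: "0 < r"
    obtain N where N: "\<forall>k\<ge>N. summable (\<lambda>m. (cmod (L m - vec_of (X k) m))\<^sup>2) \<and>
                (\<Sum>m. (cmod (L m - vec_of (X k) m))\<^sup>2) \<le> (r/2)\<^sup>2"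
      using key[of "r/2"] r by auto
    show "\<exists>no. \<forall>n\<ge>no. norm (X n - Lv) < r"
    proof (intro exI allI impI)
      fix k assume "N \<le> k"
      hence "(\<Sum>m. (cmod (L m - vec_of (X k) m))\<^sup>2) \<le> (r/2)\<^sup>2" using N by auto
      moreover have "(norm (X k - Lv))\<^sup>2 = (\<Sum>m. (cmod (L m - vec_of (X k) m))\<^sup>2)"
        unfolding norm_sq_ell2 by (simp add: vL norm_minus_commute)
      ultimately have "(norm (X k - Lv))\<^sup>2 \<le> (r/2)\<^sup>2" by simp
      hence "norm (X k - Lv) \<le> r/2" by (rule power2_le_imp_le) (use r in auto)
      thus "norm (X k - Lv) < r" using r by linarith
    qed
  qed
  thus "convergent X" by (auto simp: convergent_def)
qed


lemma cnj_mult_self: "cnj z * z = complex_of_real ((cmod z)\<^sup>2)"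
  by (metis complex_norm_square mult.commute)
lemma mult_cnj_self: "z * cnj z = complex_of_real ((cmod z)\<^sup>2)"
  by (metis complex_norm_square)

definition cinn :: "ell2 \<Rightarrow> ell2 \<Rightarrow> complex" where
  "cinn x y = (\<Sum>n. cnj (vec_of x n) * vec_of y n)"

lift_definition csc :: "complex \<Rightarrow> ell2 \<Rightarrow> ell2" is "\<lambda>c x n. c * x n"
proof -
  fix c :: complex and x :: "nat \<Rightarrow> complex"
  assume "summable (\<lambda>n. (cmod (x n))\<^sup>2)"
  then have "summable (\<lambda>n. (cmod c)\<^sup>2 * (cmod (x n))\<^sup>2)" by (rule summable_mult)
  then show "summable (\<lambda>n. (cmod (c * x n))\<^sup>2)"
    by (simp add: norm_mult power_mult_distrib)
qed

lift_definition kt :: "nat \<Rightarrow> ell2" is "\<lambda>k n. if n = k then 1 else 0"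
proof -
  fix k :: nat
  show "summable (\<lambda>n. (cmod (if n = k then 1 else 0 :: complex))\<^sup>2)"
    by (rule summable_finite[of "{k}"]) auto
qed

lemma vec_of_csc [simp]: "vec_of (csc c x) n = c * vec_of x n" by transfer simp
lemma vec_of_kt: "vec_of (kt k) n = (if n = k then 1 else 0)" by transfer simp

lemma summable_cinn: "summable (\<lambda>n. cnj (vec_of x n) * vec_of y n)"
  by (rule sq_summable_prod) auto

lemma cinn_add_right: "cinn x (y + z) = cinn x y + cinn x z"
proof -
  have "cinn x (y + z) = (\<Sum>n. cnj (vec_of x n) * vec_of y n + cnj (vec_of x n) * vec_of z n)"
    by (simp add: cinn_def distrib_left)
  also have "\<dots> = cinn x y + cinn x z"
    unfolding cinn_def by (rule suminf_add[symmetric]) (rule summable_cinn)+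
  finally show ?thesis .
qed

lemma cinn_csc_right: "cinn x (csc c y) = c * cinn x y"
proof -
  have "cinn x (csc c y) = (\<Sum>n. c * (cnj (vec_of x n) * vec_of y n))"
    by (simp add: cinn_def mult.left_commute)
  also have "\<dots> = c * cinn x y"
    unfolding cinn_def using summable_cinn by (simp add: suminf_mult)
  finally show ?thesis .
qed

lemma cinn_commute: "cinn y x = cnj (cinn x y)"
  unfolding cinn_def using suminf_cnj[OF summable_cinn[of x y]] by (simp add: mult.commute)

lemma cinn_add_left: "cinn (x + y) z = cinn x z + cinn y z"
  by (metis cinn_add_right cinn_commute complex_cnj_add)

lemma cinn_csc_left: "cinn (csc c x) y = cnj c * cinn x y"
  by (metis cinn_csc_right cinn_commute complex_cnj_mult)

lemma csc_minus_one: "- x = csc (-1) x" by (rule ell2_eqI) simp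
lemma csc_diff_eq: "x - y = x + csc (-1) y" by (rule ell2_eqI) simp

lemma cinn_diff_right: "cinn x (y - z) = cinn x y - cinn x z"
  by (simp add: csc_diff_eq cinn_add_right cinn_csc_right)
lemma cinn_diff_left: "cinn (x - y) z = cinn x z - cinn y z"
  by (simp add: csc_diff_eq cinn_add_left cinn_csc_left)
lemma cinn_minus_right: "cinn x (- y) = - cinn x y"
  by (simp add: csc_minus_one cinn_csc_right)
lemma cinn_minus_left: "cinn (- x) y = - cinn x y"
  by (simp add: csc_minus_one cinn_csc_left)
lemma cinn_zero_right [simp]: "cinn x 0 = 0" by (simp add: cinn_def)
lemma cinn_zero_left [simp]: "cinn 0 x = 0" by (simp add: cinn_def)

lemma cinn_sum_right: "cinn x (sum f A) = (\<Sum>a\<in>A. cinn x (f a))"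
  by (induction A rule: infinite_finite_induct) (auto simp: cinn_add_right)
lemma cinn_sum_left: "cinn (sum f A) x = (\<Sum>a\<in>A. cinn (f a) x)"
  by (induction A rule: infinite_finite_induct) (auto simp: cinn_add_left)

lemma csc_scaleR: "csc (complex_of_real r) x = r *\<^sub>R x" by (rule ell2_eqI) simp

lemma cinn_scaleR_right: "cinn x (r *\<^sub>R y) = complex_of_real r * cinn x y"
  by (metis csc_scaleR cinn_csc_right)
lemma cinn_scaleR_left: "cinn (r *\<^sub>R x) y = complex_of_real r * cinn x y"
  by (metis csc_scaleR cinn_csc_left complex_cnj_complex_of_real)

lemma Re_cinn: "Re (cinn x y) = inner x y"
  unfolding cinn_def by transfer simp

lemma cinn_self: "cinn x x = complex_of_real ((norm x)\<^sup>2)"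
proof -
  have "cinn x x = (\<Sum>n. complex_of_real ((cmod (vec_of x n))\<^sup>2))"
    unfolding cinn_def by (simp only: cnj_mult_self)
  also have "\<dots> = complex_of_real (\<Sum>n. (cmod (vec_of x n))\<^sup>2)"
    by (rule suminf_of_real[symmetric]) simp
  finally show ?thesis by (simp add: norm_sq_ell2)
qed

lemma norm_csc: "norm (csc c x) = cmod c * norm x"
proof -
  have "(norm (csc c x))\<^sup>2 = (\<Sum>n. (cmod c)\<^sup>2 * (cmod (vec_of x n))\<^sup>2)"
    by (simp add: norm_sq_ell2 norm_mult power_mult_distrib)
  also have "\<dots> = (cmod c * norm x)\<^sup>2"
    by (simp add: norm_sq_ell2 suminf_mult power_mult_distrib)
  finally show ?thesis
    by (metis norm_ge_zero mult_nonneg_nonneg power2_eq_iff_nonneg)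
qed

lemma csc_csc [simp]: "csc c (csc d x) = csc (c * d) x" by (rule ell2_eqI) (simp add: mult.assoc)
lemma csc_one [simp]: "csc 1 x = x" by (rule ell2_eqI) simp
lemma csc_zero [simp]: "csc 0 x = 0" by (rule ell2_eqI) simp
lemma csc_zero_right [simp]: "csc c 0 = 0" by (rule ell2_eqI) simp
lemma csc_add_right: "csc c (x + y) = csc c x + csc c y" by (rule ell2_eqI) (simp add: distrib_left)
lemma csc_add_left: "csc (c + d) x = csc c x + csc d x" by (rule ell2_eqI) (simp add: distrib_right)
lemma csc_diff_right: "csc c (x - y) = csc c x - csc c y" by (rule ell2_eqI) (simp add: right_diff_distrib)
lemma csc_sum_right: "csc c (sum f A) = (\<Sum>a\<in>A. csc c (f a))"
  by (induction A rule: infinite_finite_induct) (auto simp: csc_add_right)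
lemma csc_sum_left: "csc (sum f A) x = (\<Sum>a\<in>A. csc (f a) x)"
  by (induction A rule: infinite_finite_induct) (auto simp: csc_add_left)

lemma cauchy_schwarz_c: "cmod (cinn x y) \<le> norm x * norm y"
proof (cases "cinn x y = 0")
  case True thus ?thesis by simp
next
  case False
  define u where "u = cinn x y / complex_of_real (cmod (cinn x y))"
  have u: "cmod u = 1" using False by (simp add: u_def norm_divide)
  have "cinn (csc u x) y = cnj u * cinn x y" by (rule cinn_csc_left)
  also have "\<dots> = cnj (cinn x y) * cinn x y / complex_of_real (cmod (cinn x y))"
    unfolding u_def by simp
  also have "\<dots> = complex_of_real ((cmod (cinn x y))\<^sup>2) / complex_of_real (cmod (cinn x y))"
    by (simp only: cnj_mult_self)
  also have "\<dots> = complex_of_real (cmod (cinn x y))"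
    using False by (simp add: power2_eq_square)
  finally have "cmod (cinn x y) = inner (csc u x) y" by (metis Re_cinn Re_complex_of_real)
  also have "\<dots> \<le> norm (csc u x) * norm y" by (rule norm_cauchy_schwarz)
  also have "\<dots> = norm x * norm y" by (simp add: norm_csc u)
  finally show ?thesis .
qed

lemma bounded_bilinear_cinn: "bounded_bilinear cinn"
proof
  fix a a' b b' :: ell2 and r :: real
  show "cinn (a + a') b = cinn a b + cinn a' b" by (rule cinn_add_left)
  show "cinn a (b + b') = cinn a b + cinn a b'" by (rule cinn_add_right)
  show "cinn (r *\<^sub>R a) b = r *\<^sub>R cinn a b" by (simp add: cinn_scaleR_left scaleR_conv_of_real)
  show "cinn a (r *\<^sub>R b) = r *\<^sub>R cinn a b" by (simp add: cinn_scaleR_right scaleR_conv_of_real)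
  show "\<exists>K. \<forall>a b. norm (cinn a b) \<le> norm a * norm b * K"
    by (rule exI[of _ 1]) (simp add: cauchy_schwarz_c)
qed

lemmas tendsto_cinn [tendsto_intros] = bounded_bilinear.tendsto[OF bounded_bilinear_cinn]

lemma bounded_linear_cinn_right: "bounded_linear (cinn x)"
  by (rule bounded_bilinear.bounded_linear_right[OF bounded_bilinear_cinn])
lemma bounded_linear_cinn_left: "bounded_linear (\<lambda>y. cinn y x)"
  by (rule bounded_bilinear.bounded_linear_left[OF bounded_bilinear_cinn])

lemma cinn_kt_left [simp]: "cinn (kt m) x = vec_of x m"
proof -
  have "cinn (kt m) x = (\<Sum>n. if n = m then vec_of x m else 0)"
    unfolding cinn_def by (rule arg_cong[where f=suminf]) (auto simp: vec_of_kt)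
  also have "\<dots> = vec_of x m" by (subst suminf_finite[of "{m}"]) auto
  finally show ?thesis .
qed

lemma cinn_kt_right [simp]: "cinn x (kt m) = cnj (vec_of x m)"
  by (metis cinn_commute cinn_kt_left)

lemma norm_kt [simp]: "norm (kt m) = 1"
proof -
  have "complex_of_real ((norm (kt m))\<^sup>2) = 1" using cinn_self[of "kt m"] by (simp add: vec_of_kt)
  thus ?thesis by (metis norm_ge_zero of_real_eq_1_iff power2_eq_1_iff real_sqrt_one real_sqrt_unique)
qed

lemma norm_sq_cinn: "(norm x)\<^sup>2 = Re (cinn x x)" by (simp add: cinn_self)

lemma cinn_eq_zero_iff [simp]: "cinn x x = 0 \<longleftrightarrow> x = 0"
  by (simp add: cinn_self)

lemma cinn_self_real: "cinn x x \<in> \<real>" by (simp add: cinn_self)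

definition trunc :: "nat \<Rightarrow> ell2 \<Rightarrow> ell2" where
  "trunc N x = (\<Sum>m<N. csc (vec_of x m) (kt m))"

lemma vec_of_trunc: "vec_of (trunc N x) n = (if n < N then vec_of x n else 0)"
  by (simp add: trunc_def vec_of_kt if_distrib cong: if_cong)

lemma trunc_tendsto: "(\<lambda>N. trunc N x) \<longlonglongrightarrow> x"
proof -
  define f where "f n = (cmod (vec_of x n))\<^sup>2" for n
  have sf: "summable f" using sq_summ[of x] by (simp add: f_def[abs_def])
  have eq: "(norm (x - trunc N x))\<^sup>2 = suminf f - (\<Sum>n<N. f n)" for N
  proof -
    have "(norm (x - trunc N x))\<^sup>2 = (\<Sum>n. if n < N then 0 else f n)"
      unfolding norm_sq_ell2 by (rule arg_cong[where f=suminf]) (auto simp: vec_of_trunc f_def)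
    also have "\<dots> = (\<Sum>n. f (n + N))"
    proof -
      have s: "summable (\<lambda>n. if n < N then 0 else f n)"
        by (rule summable_comparison_test'[OF sf, where N=0]) (auto simp: f_def)
      have "(\<Sum>n. if n < N then 0 else f n) = (\<Sum>n. (if n + N < N then 0 else f (n + N))) + (\<Sum>n<N. if n < N then 0 else f n)"
        by (rule suminf_split_initial_segment[OF s])
      thus ?thesis by simp
    qed
    also have "\<dots> = suminf f - (\<Sum>n<N. f n)"
      by (rule suminf_minus_initial_segment[OF sf])
    finally show ?thesis .
  qed
  have "(\<lambda>N. suminf f - (\<Sum>n<N. f n)) \<longlonglongrightarrow> suminf f - suminf f"
    by (intro tendsto_intros summable_LIMSEQ sf)
  hence "(\<lambda>N. (norm (x - trunc N x))\<^sup>2) \<longlonglongrightarrow> 0" by (simp add: eq)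
  hence "(\<lambda>N. sqrt ((norm (x - trunc N x))\<^sup>2)) \<longlonglongrightarrow> sqrt 0" by (intro tendsto_intros)
  hence "(\<lambda>N. norm (x - trunc N x)) \<longlonglongrightarrow> 0" by simp
  hence "(\<lambda>N. norm (trunc N x - x)) \<longlonglongrightarrow> 0" by (simp add: norm_minus_commute)
  thus ?thesis by (simp add: tendsto_norm_zero_iff LIM_zero_cancel)
qed


definition clin :: "(ell2 \<Rightarrow> ell2) \<Rightarrow> bool" where
  "clin T \<longleftrightarrow> bounded_linear T \<and> (\<forall>c x. T (csc c x) = csc c (T x))"

lemma clin_bl: "clin T \<Longrightarrow> bounded_linear T" by (simp add: clin_def)
lemma clin_csc: "clin T \<Longrightarrow> T (csc c x) = csc c (T x)" by (simp add: clin_def)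
lemma clin_add: "clin T \<Longrightarrow> T (x + y) = T x + T y"
  by (simp add: clin_def linear_simps)
lemma clin_diff: "clin T \<Longrightarrow> T (x - y) = T x - T y"
  by (simp add: clin_def linear_simps)
lemma clin_zero: "clin T \<Longrightarrow> T 0 = 0"
  by (simp add: clin_def linear_simps)
lemma clin_sum: "clin T \<Longrightarrow> T (sum f A) = (\<Sum>a\<in>A. T (f a))"
  by (induction A rule: infinite_finite_induct) (auto simp: clin_add clin_zero)
lemma clin_bound: "clin T \<Longrightarrow> \<exists>K>0. \<forall>x. norm (T x) \<le> norm x * K"
  using clin_bl bounded_linear.pos_bounded by blast
lemma clin_tendsto: "clin T \<Longrightarrow> (f \<longlongrightarrow> a) F \<Longrightarrow> ((\<lambda>n. T (f n)) \<longlongrightarrow> T a) F"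
  using clin_bl bounded_linear.tendsto by blast

lemma clin_id: "clin id" by (simp add: clin_def bounded_linear_ident[unfolded id_def] id_def)
lemma clin_comp: "clin S \<Longrightarrow> clin T \<Longrightarrow> clin (S \<circ> T)"
  by (simp add: clin_def comp_def bounded_linear_compose)

lemma clinI:
  assumes "\<And>x y. T (x + y) = T x + T y" "\<And>c x. T (csc c x) = csc c (T x)"
    "\<And>x. norm (T x) \<le> norm x * K"
  shows "clin T"
  unfolding clin_def
proof
  show "bounded_linear T"
  proof (rule bounded_linear_intro[OF assms(1) _ assms(3)])
    fix r x show "T (r *\<^sub>R x) = r *\<^sub>R T x" using assms(2)[of "complex_of_real r" x] by (simp add: csc_scaleR)
  qed
qed (use assms in auto)

lemma norm_comb_sq:
  assumes "finite F"
  shows "(norm (\<Sum>m\<in>F. csc (c m) (kt m)))\<^sup>2 = (\<Sum>m\<in>F. (cmod (c m))\<^sup>2)"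
proof -
  let ?v = "\<Sum>m\<in>F. csc (c m) (kt m)"
  have vm: "vec_of ?v m = (if m \<in> F then c m else 0)" for m
  proof -
    have "vec_of ?v m = (\<Sum>m'\<in>F. if m = m' then c m' else 0)" by (simp add: vec_of_kt if_distrib cong: if_cong)
    also have "\<dots> = (if m \<in> F then c m else 0)" using assms by (simp add: sum.delta)
    finally show ?thesis .
  qed
  have "cinn ?v ?v = (\<Sum>m\<in>F. cnj (c m) * cinn (kt m) ?v)"
    by (simp add: cinn_sum_left cinn_csc_left)
  also have "\<dots> = (\<Sum>m\<in>F. complex_of_real ((cmod (c m))\<^sup>2))"
  proof (rule sum.cong[OF refl])
    fix m assume m: "m \<in> F"
    have "cinn (kt m) ?v = vec_of ?v m" by (rule cinn_kt_left)
    also have "\<dots> = c m" by (simp only: vm[of m] m if_True)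
    finally show "cnj (c m) * cinn (kt m) ?v = complex_of_real ((cmod (c m))\<^sup>2)"
      by (simp only: cnj_mult_self)
  qed
  finally have "complex_of_real ((norm ?v)\<^sup>2) = complex_of_real (\<Sum>m\<in>F. (cmod (c m))\<^sup>2)"
    by (simp add: cinn_self)
  thus ?thesis using of_real_eq_iff by blast
qed

definition adjv :: "(ell2 \<Rightarrow> ell2) \<Rightarrow> ell2 \<Rightarrow> ell2" where
  "adjv T x = mk_ell2 (\<lambda>m. cinn (T (kt m)) x)"

lemma adjv_partial_bound:
  assumes T: "clin T" and K: "\<forall>y. norm (T y) \<le> norm y * K" "K > 0" and that: "finite F"
  shows "(\<Sum>m\<in>F. (cmod (cinn (T (kt m)) x))\<^sup>2) \<le> K\<^sup>2 * (norm x)\<^sup>2"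
proof -
  define c where "c m = cinn (T (kt m)) x" for m
  define S where "S = (\<Sum>m\<in>F. (cmod (c m))\<^sup>2)"
  define v where "v = (\<Sum>m\<in>F. csc (c m) (kt m))"
  have S0: "S \<ge> 0" unfolding S_def by (simp add: sum_nonneg)
  have nv: "norm v = sqrt S" unfolding v_def S_def using norm_comb_sq[OF that, of c]
    by (metis norm_ge_zero real_sqrt_unique)
  have "cinn (T v) x = (\<Sum>m\<in>F. cnj (c m) * c m)"
    unfolding v_def by (simp add: clin_sum[OF T] clin_csc[OF T] cinn_sum_left cinn_csc_left c_def)
  also have "\<dots> = complex_of_real S" by (simp add: S_def cnj_mult_self)
  finally have "S = cmod (cinn (T v) x)" using S0 by simp
  also have "\<dots> \<le> norm (T v) * norm x" by (rule cauchy_schwarz_c)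
  also have "\<dots> \<le> norm v * K * norm x" using K by (simp add: mult_right_mono)
  finally have "S \<le> sqrt S * (K * norm x)" by (simp add: nv mult.assoc)
  hence le: "sqrt S * sqrt S \<le> sqrt S * (K * norm x)" using S0 by simp
  have "sqrt S \<le> K * norm x"
  proof (cases "sqrt S = 0")
    case True thus ?thesis using K by simp
  next
    case False hence "sqrt S > 0" using S0 by simp
    thus ?thesis using le mult_le_cancel_left_pos by blast
  qed
  hence "(sqrt S)\<^sup>2 \<le> (K * norm x)\<^sup>2" using S0 by (intro power_mono) auto
  hence "S \<le> K\<^sup>2 * (norm x)\<^sup>2" using S0 by (simp add: power_mult_distrib)
  thus ?thesis unfolding S_def c_def .
qed

lemma adjv_summable:
  assumes T: "clin T"
  shows "summable (\<lambda>m. (cmod (cinn (T (kt m)) x))\<^sup>2)"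
proof -
  obtain K where K: "K > 0" "\<forall>y. norm (T y) \<le> norm y * K" using clin_bound[OF T] by blast
  show ?thesis
  proof (rule summableI_nonneg_bounded[where x="K\<^sup>2 * (norm x)\<^sup>2"])
    fix n show "sum (\<lambda>m. (cmod (cinn (T (kt m)) x))\<^sup>2) {..<n} \<le> K\<^sup>2 * (norm x)\<^sup>2"
      by (rule adjv_partial_bound[OF T K(2) K(1)]) simp
  qed simp
qed

lemma vec_of_adjv: "clin T \<Longrightarrow> vec_of (adjv T x) m = cinn (T (kt m)) x"
  unfolding adjv_def using adjv_summable by (simp add: mk_ell2_inverse)

lemma cinn_trunc_left: "cinn (trunc N y) z = (\<Sum>m<N. cnj (vec_of y m) * vec_of z m)"
  by (simp add: trunc_def cinn_sum_left cinn_csc_left)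

lemma adjv_cinn:
  assumes T: "clin T"
  shows "cinn (T y) x = cinn y (adjv T x)"
proof -
  have eq: "cinn (T (trunc N y)) x = cinn (trunc N y) (adjv T x)" for N
    by (simp add: cinn_trunc_left vec_of_adjv[OF T] trunc_def clin_sum[OF T] clin_csc[OF T]
        cinn_sum_left cinn_csc_left)
  have "(\<lambda>N. cinn (T (trunc N y)) x) \<longlonglongrightarrow> cinn (T y) x"
    by (intro tendsto_intros clin_tendsto[OF T] trunc_tendsto)
  moreover have "(\<lambda>N. cinn (trunc N y) (adjv T x)) \<longlonglongrightarrow> cinn y (adjv T x)"
    by (intro tendsto_intros trunc_tendsto)
  ultimately show ?thesis using eq LIMSEQ_unique by auto
qed

lemma adjv_clin:
  assumes T: "clin T"
  shows "clin (adjv T)"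
proof -
  obtain K where K: "K > 0" "\<forall>y. norm (T y) \<le> norm y * K" using clin_bound[OF T] by blast
  show ?thesis
  proof (rule clinI[where K=K])
    fix x y show "adjv T (x + y) = adjv T x + adjv T y"
      by (rule ell2_eqI) (simp add: vec_of_adjv[OF T] cinn_add_right)
    fix c show "adjv T (csc c x) = csc c (adjv T x)"
      by (rule ell2_eqI) (simp add: vec_of_adjv[OF T] cinn_csc_right)
  next
    fix x
    have "(norm (adjv T x))\<^sup>2 = (\<Sum>m. (cmod (cinn (T (kt m)) x))\<^sup>2)"
      by (simp add: norm_sq_ell2 vec_of_adjv[OF T])
    also have "\<dots> \<le> K\<^sup>2 * (norm x)\<^sup>2"
      by (rule suminf_le_const[OF adjv_summable[OF T]], rule adjv_partial_bound[OF T K(2) K(1)]) simp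
    also have "\<dots> = (norm x * K)\<^sup>2" by (simp add: power_mult_distrib)
    finally show "norm (adjv T x) \<le> norm x * K"
      by (rule power2_le_imp_le) (use K in auto)
  qed
qed

lemma adjv_cinn': "clin T \<Longrightarrow> cinn (adjv T x) y = cinn x (T y)"
  by (metis adjv_cinn cinn_commute)

definition posop :: "(ell2 \<Rightarrow> ell2) \<Rightarrow> bool" where
  "posop T \<longleftrightarrow> clin T \<and> (\<forall>x. cinn x (T x) \<in> \<real> \<and> 0 \<le> Re (cinn x (T x)))"

lemma posop_herm:
  assumes P: "posop T"
  shows "cinn (T x) y = cinn x (T y)"
proof -
  have T: "clin T" using P by (simp add: posop_def)
  have R: "Im (cinn z (T z)) = 0" for z using P by (simp add: posop_def complex_is_Real_iff)
  define a where "a = cinn x (T y)"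
  define b where "b = cinn y (T x)"
  have e1: "cinn (x + y) (T (x + y)) = cinn x (T x) + a + b + cinn y (T y)"
    by (simp add: clin_add[OF T] cinn_add_left cinn_add_right a_def b_def)
  have e2: "cinn (x + csc \<i> y) (T (x + csc \<i> y)) = cinn x (T x) + \<i> * a - \<i> * b + cinn y (T y)"
    by (simp add: clin_add[OF T] clin_csc[OF T] cinn_add_left cinn_add_right cinn_csc_left cinn_csc_right a_def b_def algebra_simps)
  have i1: "Im a + Im b = 0" using R[of "x + y"] R[of x] R[of y] unfolding e1 by simp
  have i2: "Re a - Re b = 0" using R[of "x + csc \<i> y"] R[of x] R[of y] unfolding e2 by simp
  have "b = cnj a" using i1 i2 by (simp add: complex_eq_iff)
  have "cinn (T x) y = cnj b" by (simp add: b_def cinn_commute[of y])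
  thus ?thesis using \<open>b = cnj a\<close> by (simp add: a_def)
qed

lemma posop_cs:
  assumes P: "posop T"
  shows "(cmod (cinn u (T v)))\<^sup>2 \<le> Re (cinn u (T u)) * Re (cinn v (T v))"
proof -
  have T: "clin T" using P by (simp add: posop_def)
  define a where "a = cinn u (T v)"
  define qu where "qu = Re (cinn u (T u))"
  define qv where "qv = Re (cinn v (T v))"
  have qu0: "qu \<ge> 0" and qv0: "qv \<ge> 0" using P by (auto simp: posop_def qu_def qv_def)
  have expand: "0 \<le> qu - 2 * t * (cmod a)\<^sup>2 + t\<^sup>2 * (cmod a)\<^sup>2 * qv" for t :: real
  proof -
    define s where "s = - complex_of_real t * cnj a"
    have h: "cinn v (T u) = cnj a"
      using posop_herm[OF P, of v u] by (simp add: a_def cinn_commute[of "T v"])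
    have "cinn (u + csc s v) (T (u + csc s v)) =
          cinn u (T u) + s * a + cnj s * cnj a + cnj s * s * cinn v (T v)"
      by (simp add: clin_add[OF T] clin_csc[OF T] cinn_add_left cinn_add_right cinn_csc_left
          cinn_csc_right a_def h algebra_simps)
    moreover have "Re \<dots> = qu - 2 * t * (cmod a)\<^sup>2 + t\<^sup>2 * (cmod a)\<^sup>2 * qv"
    proof -
      have "s * a = - complex_of_real (t * (cmod a)\<^sup>2)" unfolding s_def
        by (metis cnj_mult_self mult.assoc mult_minus_left of_real_mult)
      hence r1: "Re (s * a) = - t * (cmod a)\<^sup>2" by simp
      have "cnj s * cnj a = - complex_of_real (t * (cmod a)\<^sup>2)" unfolding s_def
        by (simp only: complex_cnj_mult complex_cnj_minus complex_cnj_complex_of_real complex_cnj_cnj)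
           (metis mult_cnj_self mult.assoc mult_minus_left of_real_mult)
      hence r2: "Re (cnj s * cnj a) = - t * (cmod a)\<^sup>2" by simp
      have r3: "cnj s * s = complex_of_real (t\<^sup>2 * (cmod a)\<^sup>2)" unfolding s_def
        by (simp add: power2_eq_square mult_ac)
          (metis (no_types, lifting) cnj_mult_self mult.commute mult.left_commute of_real_mult power2_eq_square)
      have r4: "Re (complex_of_real r * z) = r * Re z" for r z by simp
      show ?thesis by (simp only: plus_complex.sel r1 r2 r3) (simp add: qu_def qv_def algebra_simps)
    qed
    ultimately show ?thesis using P by (metis posop_def)
  qed
  show ?thesis
  proof (cases "qv = 0")
    case True
    have "(cmod a)\<^sup>2 = 0"
    proof (rule ccontr)
      assume ne: "(cmod a)\<^sup>2 \<noteq> 0"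
      hence pos: "(cmod a)\<^sup>2 > 0" by simp
      have "0 \<le> qu - 2 * ((qu + 1) / (cmod a)\<^sup>2) * (cmod a)\<^sup>2" using expand[of "(qu + 1) / (cmod a)\<^sup>2"] True by simp
      also have "\<dots> = qu - 2 * (qu + 1)" using ne by simp
      finally have "0 \<le> - qu - 2" by (simp add: algebra_simps)
      thus False using qu0 by linarith
    qed
    thus ?thesis by (simp add: a_def[symmetric] qu_def[symmetric] qv_def[symmetric] True)
  next
    case False
    hence qvp: "qv > 0" using qv0 by simp
    have "0 \<le> qu - 2 * (1/qv) * (cmod a)\<^sup>2 + (1/qv)\<^sup>2 * (cmod a)\<^sup>2 * qv" by (rule expand)
    also have "\<dots> = qu - (cmod a)\<^sup>2 / qv" using qvp by (simp add: power2_eq_square field_simps)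
    finally have "(cmod a)\<^sup>2 / qv \<le> qu" by simp
    hence "(cmod a)\<^sup>2 \<le> qu * qv" using qvp by (simp add: divide_le_eq)
    thus ?thesis by (simp add: a_def qu_def qv_def)
  qed
qed

lemma posop_zero_form:
  assumes P: "posop T" and z: "Re (cinn u (T u)) = 0"
  shows "T u = 0"
proof -
  have "(cmod (cinn (T u) (T u)))\<^sup>2 \<le> Re (cinn (T u) (T (T u))) * Re (cinn u (T u))"
    using posop_cs[OF P, of "T u" u] by simp
  hence "cinn (T u) (T u) = 0" using z by simp
  thus ?thesis using cinn_eq_zero_iff by blast
qed


instance ell2 :: banach ..
instance ell2 :: uniform_topological_group_add ..

definition rk :: "ell2 \<Rightarrow> ell2 \<Rightarrow> ell2" where "rk w x = csc (cinn w x) w"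

lemma norm_rk: "norm (rk w x) \<le> (norm w)\<^sup>2 * norm x"
proof -
  have "norm (rk w x) = cmod (cinn w x) * norm w" by (simp add: rk_def norm_csc)
  also have "\<dots> \<le> (norm w * norm x) * norm w" by (intro mult_right_mono cauchy_schwarz_c) auto
  finally show ?thesis by (simp add: power2_eq_square mult_ac)
qed

lemma rk_add: "rk w (x + y) = rk w x + rk w y" by (simp add: rk_def cinn_add_right csc_add_left)
lemma rk_csc: "rk w (csc c x) = csc c (rk w x)" by (simp add: rk_def cinn_csc_right mult.commute)
lemma rk_zero [simp]: "rk 0 x = 0" by (simp add: rk_def)
lemma cinn_rk: "cinn y (rk w x) = cinn w x * cinn y w" by (simp add: rk_def cinn_csc_right)
lemma cinn_rk_self: "cinn x (rk w x) = complex_of_real ((cmod (cinn w x))\<^sup>2)"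
  by (simp add: cinn_rk cinn_commute[of x w] mult_cnj_self)

lemma bounded_linear_csc: "bounded_linear (csc c)"
  by (rule bounded_linear_intro[where K="cmod c"])
     (auto simp: csc_add_right norm_csc csc_scaleR[symmetric] mult.commute)

lemma clin_rk: "clin (rk w)"
  by (rule clinI[where K="(norm w)\<^sup>2"]) (auto simp: rk_add rk_csc, metis norm_rk mult.commute)

definition hs :: "('i \<Rightarrow> ell2) \<Rightarrow> bool" where
  "hs g \<longleftrightarrow> (\<lambda>i. (norm (g i))\<^sup>2) summable_on UNIV"

definition Dop :: "('i \<Rightarrow> ell2) \<Rightarrow> ell2 \<Rightarrow> ell2" where
  "Dop g x = infsum (\<lambda>i. rk (g i) x) UNIV"

definition hsn :: "('i \<Rightarrow> ell2) \<Rightarrow> real" where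
  "hsn g = infsum (\<lambda>i. (norm (g i))\<^sup>2) UNIV"

lemma hsn_nonneg: "hsn g \<ge> 0" unfolding hsn_def by (rule infsum_nonneg) auto

lemma rk_abs_summable:
  assumes "hs g" shows "(\<lambda>i. rk (g i) x) abs_summable_on UNIV"
proof (rule summable_on_comparison_test)
  show "(\<lambda>i. (norm (g i))\<^sup>2 * norm x) summable_on UNIV"
    using assms unfolding hs_def by (rule summable_on_cmult_left)
qed (auto simp: norm_rk)

lemma Dop_has_sum: assumes "hs g" shows "((\<lambda>i. rk (g i) x) has_sum Dop g x) UNIV"
  unfolding Dop_def by (rule has_sum_infsum[OF abs_summable_summable[OF rk_abs_summable[OF assms]]])

lemma hs_has_sum: "hs g \<Longrightarrow> ((\<lambda>i. (norm (g i))\<^sup>2) has_sum hsn g) UNIV"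
  unfolding hs_def hsn_def by auto

lemma Dop_norm: "hs g \<Longrightarrow> norm (Dop g x) \<le> hsn g * norm x"
proof -
  assume g: "hs g"
  have "((\<lambda>i. (norm (g i))\<^sup>2 * norm x) has_sum hsn g * norm x) UNIV"
    using hs_has_sum[OF g] by (rule has_sum_cmult_left)
  thus ?thesis by (rule norm_infsum_le[OF Dop_has_sum[OF g]]) (simp add: norm_rk)
qed

lemma Dop_add: "hs g \<Longrightarrow> Dop g (x + y) = Dop g x + Dop g y"
proof -
  assume g: "hs g"
  have "((\<lambda>i. rk (g i) x + rk (g i) y) has_sum Dop g x + Dop g y) UNIV"
    by (intro has_sum_add Dop_has_sum g)
  hence "((\<lambda>i. rk (g i) (x + y)) has_sum Dop g x + Dop g y) UNIV" by (simp add: rk_add)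
  thus ?thesis using Dop_has_sum[OF g, of "x + y"] has_sum_unique by blast
qed

lemma Dop_csc: "hs g \<Longrightarrow> Dop g (csc c x) = csc c (Dop g x)"
proof -
  assume g: "hs g"
  have "((\<lambda>i. csc c (rk (g i) x)) has_sum csc c (Dop g x)) UNIV"
    by (intro has_sum_bounded_linear[OF bounded_linear_csc] Dop_has_sum g)
  hence "((\<lambda>i. rk (g i) (csc c x)) has_sum csc c (Dop g x)) UNIV" by (simp add: rk_csc)
  thus ?thesis using Dop_has_sum[OF g, of "csc c x"] has_sum_unique by blast
qed

lemma Dop_clin: "hs g \<Longrightarrow> clin (Dop g)"
  by (rule clinI[where K="hsn g"]) (auto simp: Dop_add Dop_csc, metis Dop_norm mult.commute)

lemma cinn_Dop_has_sum: "hs g \<Longrightarrow> ((\<lambda>i. cinn (g i) x * cinn y (g i)) has_sum cinn y (Dop g x)) UNIV"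
proof -
  assume g: "hs g"
  have "((\<lambda>i. cinn y (rk (g i) x)) has_sum cinn y (Dop g x)) UNIV"
    by (intro has_sum_bounded_linear[OF bounded_linear_cinn_right] Dop_has_sum g)
  thus ?thesis by (simp add: cinn_rk)
qed

lemma form_summable: "hs g \<Longrightarrow> (\<lambda>i. (cmod (cinn (g i) x))\<^sup>2) summable_on UNIV"
proof (rule summable_on_comparison_test)
  assume g: "hs g"
  show "(\<lambda>i. (norm (g i))\<^sup>2 * (norm x)\<^sup>2) summable_on UNIV"
    using g unfolding hs_def by (rule summable_on_cmult_left)
  fix i
  have "cmod (cinn (g i) x) \<le> norm (g i) * norm x" by (rule cauchy_schwarz_c)
  hence "(cmod (cinn (g i) x))\<^sup>2 \<le> (norm (g i) * norm x)\<^sup>2" by (intro power_mono) auto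
  thus "(cmod (cinn (g i) x))\<^sup>2 \<le> (norm (g i))\<^sup>2 * (norm x)\<^sup>2" by (simp add: power_mult_distrib)
qed auto

lemma Dop_form:
  assumes g: "hs g"
  shows "cinn x (Dop g x) = complex_of_real (infsum (\<lambda>i. (cmod (cinn (g i) x))\<^sup>2) UNIV)"
proof -
  have "((\<lambda>i. (cmod (cinn (g i) x))\<^sup>2) has_sum infsum (\<lambda>i. (cmod (cinn (g i) x))\<^sup>2) UNIV) UNIV"
    using form_summable[OF g] by auto
  hence "((\<lambda>i. complex_of_real ((cmod (cinn (g i) x))\<^sup>2)) has_sum
          complex_of_real (infsum (\<lambda>i. (cmod (cinn (g i) x))\<^sup>2) UNIV)) UNIV"
    by (rule has_sum_bounded_linear[OF bounded_linear_of_real])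
  moreover have "((\<lambda>i. complex_of_real ((cmod (cinn (g i) x))\<^sup>2)) has_sum cinn x (Dop g x)) UNIV"
    using cinn_Dop_has_sum[OF g, of x x] by (simp add: cinn_commute[of x] mult_cnj_self)
  ultimately show ?thesis using has_sum_unique by blast
qed

lemma Dop_posop: "hs g \<Longrightarrow> posop (Dop g)"
  unfolding posop_def using Dop_clin
  by (auto simp: Dop_form infsum_nonneg)

lemma Dop_coord:
  assumes g: "hs g" and z: "\<And>i. vec_of (g i) n = 0"
  shows "vec_of (Dop g x) n = 0"
proof -
  have "((\<lambda>i. cinn (kt n) (rk (g i) x)) has_sum cinn (kt n) (Dop g x)) UNIV"
    by (intro has_sum_bounded_linear[OF bounded_linear_cinn_right] Dop_has_sum g)
  moreover have "((\<lambda>i. cinn (kt n) (rk (g i) x)) has_sum 0) UNIV" by (simp add: rk_def z)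
  ultimately have "cinn (kt n) (Dop g x) = 0" using has_sum_unique by blast
  thus ?thesis by simp
qed

locale kfam =
  fixes A :: "nat \<Rightarrow> ell2 \<Rightarrow> ell2" and c :: real
  assumes clinA: "\<And>i. clin (A i)"
    and bnd: "\<And>F v. finite F \<Longrightarrow> (\<Sum>i\<in>F. (norm (A i v))\<^sup>2) \<le> c * (norm v)\<^sup>2"
begin

lemma c_nonneg: "c \<ge> 0"
  using bnd[of "{}" "kt 0"] by simp

lemma hs_pairs:
  assumes g: "hs g"
  shows "hs (\<lambda>(i, j). A i (g j))"
  unfolding hs_def
proof (rule nonneg_bdd_above_summable_on)
  show "bdd_above (sum (\<lambda>p. (norm (case p of (i, j) \<Rightarrow> A i (g j)))\<^sup>2) ` {F. F \<subseteq> UNIV \<and> finite F})"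
  proof (rule bdd_aboveI2[where M="c * hsn g"])
    fix F :: "(nat \<times> 'a) set" assume "F \<in> {F. F \<subseteq> UNIV \<and> finite F}"
    hence F: "finite F" by simp
    have "(\<Sum>p\<in>F. (norm (case p of (i, j) \<Rightarrow> A i (g j)))\<^sup>2)
        \<le> (\<Sum>p\<in>fst ` F \<times> snd ` F. (norm (case p of (i, j) \<Rightarrow> A i (g j)))\<^sup>2)"
      by (rule sum_mono2) (use F in \<open>auto simp: finite_cartesian_product intro: rev_image_eqI\<close>)
    also have "\<dots> = (\<Sum>i\<in>fst ` F. \<Sum>j\<in>snd ` F. (norm (A i (g j)))\<^sup>2)"
      by (subst sum.cartesian_product) (simp add: case_prod_unfold)
    also have "\<dots> = (\<Sum>j\<in>snd ` F. \<Sum>i\<in>fst ` F. (norm (A i (g j)))\<^sup>2)"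
      by (rule sum.swap)
    also have "\<dots> \<le> (\<Sum>j\<in>snd ` F. c * (norm (g j))\<^sup>2)"
      by (rule sum_mono) (rule bnd, use F in auto)
    also have "\<dots> = c * (\<Sum>j\<in>snd ` F. (norm (g j))\<^sup>2)" by (simp add: sum_distrib_left)
    also have "\<dots> \<le> c * hsn g"
      using g c_nonneg unfolding hs_def hsn_def
      by (intro mult_left_mono finite_sum_le_infsum) (use F in auto)
    finally show "(\<Sum>p\<in>F. (norm (case p of (i, j) \<Rightarrow> A i (g j)))\<^sup>2) \<le> c * hsn g" .
  qed
qed auto

lemma kraus_pairs:
  assumes g: "hs g"
  shows "(\<lambda>N. \<Sum>i<N. A i (Dop g (adjv (A i) x))) \<longlonglongrightarrow> Dop (\<lambda>(i, j). A i (g j)) x"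
proof -
  let ?g' = "\<lambda>(i, j). A i (g j)"
  have inner: "((\<lambda>j. rk (A i (g j)) x) has_sum A i (Dop g (adjv (A i) x))) UNIV" for i
  proof -
    have "((\<lambda>j. A i (rk (g j) (adjv (A i) x))) has_sum A i (Dop g (adjv (A i) x))) UNIV"
      by (intro has_sum_bounded_linear[OF clin_bl[OF clinA]] Dop_has_sum g)
    moreover have "A i (rk (g j) (adjv (A i) x)) = rk (A i (g j)) x" for j
      by (simp add: rk_def clin_csc[OF clinA] adjv_cinn[OF clinA, symmetric])
    ultimately show ?thesis by simp
  qed
  have "((\<lambda>p. rk (?g' p) x) has_sum Dop ?g' x) UNIV" by (rule Dop_has_sum[OF hs_pairs[OF g]])
  hence "((\<lambda>(i, j). rk (A i (g j)) x) has_sum Dop ?g' x) (Sigma UNIV (\<lambda>_. UNIV))"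
    by (simp add: case_prod_unfold)
  hence "((\<lambda>i. A i (Dop g (adjv (A i) x))) has_sum Dop ?g' x) UNIV"
    by (rule has_sum_Sigma'[where f="\<lambda>(i, j). rk (A i (g j)) x" and b="\<lambda>i. A i (Dop g (adjv (A i) x))"])
       (use inner in simp)
  hence "(\<lambda>i. A i (Dop g (adjv (A i) x))) sums Dop ?g' x" by (rule has_sum_imp_sums)
  thus ?thesis by (simp add: sums_def)
qed

definition step :: "(nat list \<times> 'b \<Rightarrow> ell2) \<Rightarrow> nat list \<times> 'b \<Rightarrow> ell2" where
  "step g p = (case fst p of [] \<Rightarrow> 0 | i # ws \<Rightarrow> A i (g (ws, snd p)))"

definition hcons :: "nat \<times> (nat list \<times> 'b) \<Rightarrow> nat list \<times> 'b" where
  "hcons p = (fst p # fst (snd p), snd (snd p))"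

lemma inj_hcons: "inj hcons"
  by (auto simp: inj_def hcons_def prod_eq_iff)

lemma step_hcons: "step g \<circ> hcons = (\<lambda>(i, p). A i (g p))"
  by (auto simp: step_def hcons_def fun_eq_iff)

lemma step_hcons': "step g (hcons q) = A (fst q) (g (snd q))"
  by (simp add: step_def hcons_def)

lemma step_out: "p \<notin> range hcons \<Longrightarrow> step g p = 0"
proof -
  assume "p \<notin> range hcons"
  hence "fst p = []"
    by (metis (no_types) hcons_def list.exhaust prod.collapse rangeI fst_conv snd_conv)
  thus ?thesis by (simp add: step_def)
qed

lemma hs_step:
  assumes g: "hs g" shows "hs (step g)"
proof -
  have "(\<lambda>p. (norm ((step g \<circ> hcons) p))\<^sup>2) summable_on UNIV"
    using hs_pairs[OF g] unfolding hs_def step_hcons by (simp add: case_prod_beta)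
  hence "((\<lambda>p. (norm (step g p))\<^sup>2) \<circ> hcons) summable_on UNIV" by (simp add: comp_def)
  hence "(\<lambda>p. (norm (step g p))\<^sup>2) summable_on range hcons"
    using summable_on_reindex[OF inj_on_subset[OF inj_hcons], of UNIV] by auto
  thus ?thesis unfolding hs_def
    by (rule summable_on_cong_neutral[THEN iffD1, rotated -1]) (auto simp: step_out)
qed

lemma Dop_step:
  assumes g: "hs g" shows "Dop (step g) x = Dop (\<lambda>(i, p). A i (g p)) x"
proof -
  have "((\<lambda>p. rk (step g p) x) has_sum Dop (step g) x) UNIV" by (rule Dop_has_sum[OF hs_step[OF g]])
  hence "((\<lambda>p. rk (step g p) x) has_sum Dop (step g) x) (range hcons)"
    by (rule has_sum_cong_neutral[THEN iffD1, rotated -1]) (auto simp: step_out)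
  hence "(((\<lambda>p. rk (step g p) x) \<circ> hcons) has_sum Dop (step g) x) UNIV"
    using has_sum_reindex[OF inj_on_subset[OF inj_hcons], of UNIV] by auto
  hence "((\<lambda>q. rk ((\<lambda>(i, p). A i (g p)) q) x) has_sum Dop (step g) x) UNIV"
    by (simp add: comp_def step_hcons' case_prod_unfold)
  moreover have "((\<lambda>q. rk ((\<lambda>(i, p). A i (g p)) q) x) has_sum Dop (\<lambda>(i, p). A i (g p)) x) UNIV"
    by (rule Dop_has_sum[OF hs_pairs[OF g]])
  ultimately show ?thesis using has_sum_unique by blast
qed

lemma kraus_step:
  assumes g: "hs g"
  shows "(\<lambda>N. \<Sum>i<N. A i (Dop g (adjv (A i) x))) \<longlonglongrightarrow> Dop (step g) x"
  using kraus_pairs[OF g, of x] by (simp add: Dop_step[OF g])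

end


lemma clin_minus_ops:
  assumes S: "clin S" and T: "clin T"
  shows "clin (\<lambda>x. S x - T x)"
proof -
  obtain K1 where K1: "\<forall>x. norm (S x) \<le> norm x * K1" using clin_bound[OF S] by blast
  obtain K2 where K2: "\<forall>x. norm (T x) \<le> norm x * K2" using clin_bound[OF T] by blast
  show ?thesis
  proof (rule clinI[where K="K1 + K2"])
    fix x y show "S (x + y) - T (x + y) = S x - T x + (S y - T y)"
      by (simp add: clin_add[OF S] clin_add[OF T])
  next
    fix c x show "S (csc c x) - T (csc c x) = csc c (S x - T x)"
      by (simp add: clin_csc[OF S] clin_csc[OF T] csc_diff_right)
  next
    fix x
    have "norm (S x - T x) \<le> norm (S x) + norm (T x)" by (rule norm_triangle_ineq4)
    also have "\<dots> \<le> norm x * K1 + norm x * K2" using K1 K2 by (intro add_mono) auto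
    finally show "norm (S x - T x) \<le> norm x * (K1 + K2)" by (simp add: distrib_left)
  qed
qed

definition wof :: "(ell2 \<Rightarrow> ell2) \<Rightarrow> nat \<Rightarrow> ell2" where
  "wof R k = (if Re (cinn (kt k) (R (kt k))) > 0
      then csc (complex_of_real (1 / sqrt (Re (cinn (kt k) (R (kt k)))))) (R (kt k)) else 0)"

primrec Rseq :: "(ell2 \<Rightarrow> ell2) \<Rightarrow> nat \<Rightarrow> ell2 \<Rightarrow> ell2" where
  "Rseq T 0 = T"
| "Rseq T (Suc k) = (\<lambda>x. Rseq T k x - rk (wof (Rseq T k) k) x)"

definition wseq :: "(ell2 \<Rightarrow> ell2) \<Rightarrow> nat \<Rightarrow> ell2" where
  "wseq T k = wof (Rseq T k) k"

lemma Rseq_sum: "Rseq T k x = T x - (\<Sum>j<k. rk (wseq T j) x)"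
  by (induction k) (auto simp: wseq_def)

lemma peel_step:
  assumes P: "posop R" and h1: "\<forall>m<k. \<forall>x. vec_of (R x) m = 0" and h2: "\<forall>m<k. R (kt m) = 0"
  defines "w \<equiv> wof R k"
  shows "posop (\<lambda>x. R x - rk w x)"
    and "\<forall>m<Suc k. \<forall>x. vec_of (R x - rk w x) m = 0"
    and "\<forall>m<Suc k. R (kt m) - rk w (kt m) = 0"
    and "\<forall>x. Re (cinn x (R x - rk w x)) \<le> Re (cinn x (R x))"
proof -
  have Rc: "clin R" using P by (simp add: posop_def)
  define e where "e = kt k"
  define d where "d = Re (cinn e (R e))"
  have d0: "d \<ge> 0" using P by (simp add: posop_def d_def)
  have dreal: "cinn e (R e) = complex_of_real d"
    using P unfolding posop_def d_def by (metis Reals_cases Re_complex_of_real)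
  have herm: "cinn (R e) x = vec_of (R x) k" for x
    using posop_herm[OF P, of e x] by (simp add: e_def)
  have Rek: "vec_of (R e) k = complex_of_real d" using dreal by (simp add: e_def)
  have cs: "(cmod (vec_of (R x) k))\<^sup>2 \<le> d * Re (cinn x (R x))" for x
    using posop_cs[OF P, of e x] by (simp add: e_def d_def)
  have qx0: "Re (cinn x (R x)) \<ge> 0" for x using P by (simp add: posop_def)
  consider (z) "d = 0" | (p) "d > 0" using d0 by linarith
  note cases = this
  have wz: "d = 0 \<Longrightarrow> w = 0" by (simp add: w_def wof_def d_def e_def)
  have wp: "d > 0 \<Longrightarrow> w = csc (complex_of_real (1 / sqrt d)) (R e)"
    by (simp add: w_def wof_def d_def e_def)
  have z1: "d = 0 \<Longrightarrow> R e = 0" using posop_zero_form[OF P, of e] by (simp add: d_def)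
  have z2: "d = 0 \<Longrightarrow> vec_of (R x) k = 0" for x using cs[of x] by simp
  have wm: "vec_of w m = 0" if "m < k" for m
  proof (cases rule: cases)
    case z thus ?thesis by (simp add: wz)
  next
    case p thus ?thesis using h1 that by (simp add: wp)
  qed
  have form: "cinn x (R x - rk w x) = cinn x (R x) - complex_of_real ((cmod (cinn w x))\<^sup>2)" for x
    by (simp add: cinn_diff_right cinn_rk_self)
  have small: "(cmod (cinn w x))\<^sup>2 \<le> Re (cinn x (R x))" for x
  proof (cases rule: cases)
    case z thus ?thesis using qx0 by (simp add: wz)
  next
    case p
    have "cinn w x = complex_of_real (1 / sqrt d) * vec_of (R x) k"
      using p by (simp add: wp cinn_csc_left herm)
    hence "(cmod (cinn w x))\<^sup>2 = (cmod (complex_of_real (1 / sqrt d)))\<^sup>2 * (cmod (vec_of (R x) k))\<^sup>2"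
      by (simp only: norm_mult power_mult_distrib)
    also have "(cmod (complex_of_real (1 / sqrt d)))\<^sup>2 = 1 / d"
    proof -
      have "cmod (complex_of_real (1 / sqrt d)) = \<bar>1 / sqrt d\<bar>" by (rule norm_of_real)
      also have "\<dots> = 1 / sqrt d" using p by simp
      finally have "cmod (complex_of_real (1 / sqrt d)) = 1 / sqrt d" .
      thus ?thesis using p by (simp add: power_divide)
    qed
    finally have "(cmod (cinn w x))\<^sup>2 = (cmod (vec_of (R x) k))\<^sup>2 / d" by simp
    also have "\<dots> \<le> Re (cinn x (R x))" using p cs[of x] by (simp add: pos_divide_le_eq mult.commute)
    finally show ?thesis .
  qed
  show "posop (\<lambda>x. R x - rk w x)"
    unfolding posop_def
  proof (intro conjI allI)
    show "clin (\<lambda>x. R x - rk w x)" by (rule clin_minus_ops[OF Rc clin_rk])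
    fix x
    show "cinn x (R x - rk w x) \<in> \<real>" unfolding form using P
      by (simp add: posop_def)
    show "0 \<le> Re (cinn x (R x - rk w x))" unfolding form using small[of x] by simp
  qed
  show "\<forall>x. Re (cinn x (R x - rk w x)) \<le> Re (cinn x (R x))"
    unfolding form by simp
  show "\<forall>m<Suc k. \<forall>x. vec_of (R x - rk w x) m = 0"
  proof (intro allI impI)
    fix m x assume m: "m < Suc k"
    show "vec_of (R x - rk w x) m = 0"
    proof (cases "m < k")
      case True thus ?thesis using h1 wm by (simp add: rk_def)
    next
      case False hence mk: "m = k" using m by simp
      show ?thesis
      proof (cases rule: cases)
        case z thus ?thesis using z2 mk by (simp add: wz)
      next
        case p
        have "vec_of (rk w x) k = (complex_of_real (1 / sqrt d) * vec_of (R x) k) * (complex_of_real (1 / sqrt d) * complex_of_real d)"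
          using p by (simp add: rk_def wp cinn_csc_left herm Rek)
        also have "\<dots> = vec_of (R x) k * complex_of_real ((1 / sqrt d) * (1 / sqrt d) * d)"
          by (simp only: of_real_mult mult_ac)
        also have "(1 / sqrt d) * (1 / sqrt d) * d = 1" using p by (simp add: field_simps)
        finally have "vec_of (rk w x) k = vec_of (R x) k" by simp
        thus ?thesis using mk by simp
      qed
    qed
  qed
  show "\<forall>m<Suc k. R (kt m) - rk w (kt m) = 0"
  proof (intro allI impI)
    fix m assume m: "m < Suc k"
    show "R (kt m) - rk w (kt m) = 0"
    proof (cases "m < k")
      case True thus ?thesis using h2 wm by (simp add: rk_def)
    next
      case False hence mk: "m = k" using m by simp
      show ?thesis
      proof (cases rule: cases)
        case z thus ?thesis using z1 mk by (simp add: wz e_def)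
      next
        case p
        have "rk w (kt k) = csc (cnj (vec_of w k)) w" by (simp add: rk_def)
        also have "cnj (vec_of w k) = complex_of_real (1 / sqrt d * d)"
          using p Rek[unfolded e_def] by (simp add: wp e_def)
        also have "csc (complex_of_real (1 / sqrt d * d)) w = csc (complex_of_real (1 / sqrt d * d * (1 / sqrt d))) (R e)"
          by (simp only: wp[OF p] csc_csc of_real_mult[symmetric])
        also have "1 / sqrt d * d * (1 / sqrt d) = 1" using p by (simp add: field_simps)
        finally show ?thesis using mk by (simp add: e_def)
      qed
    qed
  qed
qed

lemma Rseq_props:
  assumes P: "posop T"
  shows "posop (Rseq T k) \<and> (\<forall>m<k. \<forall>x. vec_of (Rseq T k x) m = 0) \<and> (\<forall>m<k. Rseq T k (kt m) = 0)
      \<and> (\<forall>x. Re (cinn x (Rseq T k x)) \<le> Re (cinn x (T x)))"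
proof (induction k)
  case 0 thus ?case using P by simp
next
  case (Suc k)
  have a: "posop (Rseq T k)" and b: "\<forall>m<k. \<forall>x. vec_of (Rseq T k x) m = 0"
    and c: "\<forall>m<k. Rseq T k (kt m) = 0" and d: "\<forall>x. Re (cinn x (Rseq T k x)) \<le> Re (cinn x (T x))"
    using Suc by auto
  note S = peel_step[OF a b c]
  show ?case using S(1) S(2) S(3) S(4) d by (auto intro: order_trans)
qed

lemma Rseq_trunc:
  assumes P: "posop T"
  shows "Rseq T k x = Rseq T k (x - trunc k x)"
proof -
  have R: "clin (Rseq T k)" using Rseq_props[OF P, of k] by (simp add: posop_def)
  have "Rseq T k (trunc k x) = (\<Sum>m<k. csc (vec_of x m) (Rseq T k (kt m)))"
    by (simp add: trunc_def clin_sum[OF R] clin_csc[OF R])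
  also have "\<dots> = 0" using Rseq_props[OF P, of k] by simp
  finally show ?thesis by (simp add: clin_diff[OF R])
qed

lemma Rseq_tendsto:
  assumes P: "posop T"
  shows "(\<lambda>k. Rseq T k x) \<longlonglongrightarrow> 0"
proof -
  have Tc: "clin T" using P by (simp add: posop_def)
  obtain K where K: "K > 0" "\<forall>y. norm (T y) \<le> norm y * K" using clin_bound[OF Tc] by blast
  have fb: "Re (cinn y (T y)) \<le> K * (norm y)\<^sup>2" for y
  proof -
    have "Re (cinn y (T y)) \<le> cmod (cinn y (T y))" by (rule complex_Re_le_cmod)
    also have "\<dots> \<le> norm y * norm (T y)" by (rule cauchy_schwarz_c)
    also have "\<dots> \<le> norm y * (norm y * K)" using K by (intro mult_left_mono) auto
    finally show ?thesis by (simp add: power2_eq_square mult_ac)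
  qed
  have bound: "norm (Rseq T k x) \<le> K * norm (x - trunc k x)" for k
  proof -
    define R where "R = Rseq T k"
    have PR: "posop R" and le: "\<forall>x. Re (cinn x (R x)) \<le> Re (cinn x (T x))"
      using Rseq_props[OF P, of k] by (auto simp: R_def)
    define q where "q = x - trunc k x"
    define y where "y = R x"
    have yq: "y = R q" unfolding y_def q_def R_def by (rule Rseq_trunc[OF P])
    have fR: "Re (cinn z (R z)) \<le> K * (norm z)\<^sup>2" for z using le fb order_trans by blast
    have "(norm y)\<^sup>2 = Re (cinn y (R q))" by (simp add: norm_sq_cinn yq[symmetric])
    also have "\<dots> \<le> cmod (cinn y (R q))" by (rule complex_Re_le_cmod)
    finally have n1: "(norm y)\<^sup>2 \<le> cmod (cinn y (R q))" .
    have "((norm y)\<^sup>2)\<^sup>2 \<le> (cmod (cinn y (R q)))\<^sup>2" using n1 by (intro power_mono) auto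
    also have "\<dots> \<le> Re (cinn y (R y)) * Re (cinn q (R q))" by (rule posop_cs[OF PR])
    also have "\<dots> \<le> (K * (norm y)\<^sup>2) * (K * (norm q)\<^sup>2)"
      using PR fR K by (intro mult_mono) (auto simp: posop_def)
    finally have ineq0: "((norm y)\<^sup>2)\<^sup>2 \<le> (K * (norm y)\<^sup>2) * (K * (norm q)\<^sup>2)" .
    have ineq: "(norm y)\<^sup>2 * (norm y)\<^sup>2 \<le> (norm y)\<^sup>2 * (K\<^sup>2 * (norm q)\<^sup>2)"
    proof -
      have "(norm y)\<^sup>2 * (norm y)\<^sup>2 = ((norm y)\<^sup>2)\<^sup>2" by (rule power2_eq_square[symmetric])
      also have "\<dots> \<le> (K * (norm y)\<^sup>2) * (K * (norm q)\<^sup>2)" by (rule ineq0)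
      also have "\<dots> = (norm y)\<^sup>2 * (K\<^sup>2 * (norm q)\<^sup>2)" by (simp add: power2_eq_square mult_ac)
      finally show ?thesis .
    qed
    have "(norm y)\<^sup>2 \<le> (K * norm q)\<^sup>2"
    proof (cases "norm y = 0")
      case True thus ?thesis by simp
    next
      case False hence "(norm y)\<^sup>2 > 0" by simp
      hence "(norm y)\<^sup>2 \<le> K\<^sup>2 * (norm q)\<^sup>2" using ineq mult_le_cancel_left_pos by blast
      thus ?thesis by (simp add: power_mult_distrib)
    qed
    hence "norm y \<le> K * norm q" by (rule power2_le_imp_le) (use K in auto)
    thus ?thesis by (simp add: y_def q_def R_def)
  qed
  have "(\<lambda>k. K * norm (x - trunc k x)) \<longlonglongrightarrow> K * 0"
  proof (intro tendsto_intros)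
    have "(\<lambda>k. trunc k x - x) \<longlonglongrightarrow> 0" using trunc_tendsto[of x] by (simp add: LIM_zero)
    hence "(\<lambda>k. norm (trunc k x - x)) \<longlonglongrightarrow> 0" by (simp add: tendsto_norm_zero_iff)
    thus "(\<lambda>k. norm (x - trunc k x)) \<longlonglongrightarrow> 0" by (simp add: norm_minus_commute)
  qed
  hence "(\<lambda>k. K * norm (x - trunc k x)) \<longlonglongrightarrow> 0" by simp
  thus ?thesis
  proof (rule tendsto_0_le[where K=1])
    show "\<forall>\<^sub>F k in sequentially. norm (Rseq T k x) \<le> norm (K * norm (x - trunc k x)) * 1"
    proof (rule always_eventually, rule allI)
      fix k
      have "norm (Rseq T k x) \<le> K * norm (x - trunc k x)" by (rule bound)
      also have "\<dots> \<le> norm (K * norm (x - trunc k x))" by simp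
      finally show "norm (Rseq T k x) \<le> norm (K * norm (x - trunc k x)) * 1" by simp
    qed
  qed
qed

lemma peel_diag:
  assumes P: "posop T"
  shows "(\<Sum>j<k. (cmod (vec_of (wseq T j) m))\<^sup>2) \<le> Re (cinn (kt m) (T (kt m)))"
proof -
  have "cinn (kt m) (Rseq T k (kt m)) = cinn (kt m) (T (kt m)) - (\<Sum>j<k. cinn (kt m) (rk (wseq T j) (kt m)))"
    by (simp add: Rseq_sum cinn_diff_right cinn_sum_right)
  also have "(\<Sum>j<k. cinn (kt m) (rk (wseq T j) (kt m))) = complex_of_real (\<Sum>j<k. (cmod (vec_of (wseq T j) m))\<^sup>2)"
    by (simp add: cinn_rk_self)
  finally have "Re (cinn (kt m) (Rseq T k (kt m))) = Re (cinn (kt m) (T (kt m))) - (\<Sum>j<k. (cmod (vec_of (wseq T j) m))\<^sup>2)"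
    by simp
  moreover have "Re (cinn (kt m) (Rseq T k (kt m))) \<ge> 0"
    using Rseq_props[OF P, of k] unfolding posop_def by blast
  ultimately show ?thesis by linarith
qed

lemma wseq_hs:
  assumes P: "posop T" and D: "summable (\<lambda>m. Re (cinn (kt m) (T (kt m))))"
  shows "hs (wseq T)"
  unfolding hs_def
proof (rule nonneg_bdd_above_summable_on)
  show "bdd_above (sum (\<lambda>j. (norm (wseq T j))\<^sup>2) ` {F. F \<subseteq> UNIV \<and> finite F})"
  proof (rule bdd_aboveI2[where M="\<Sum>m. Re (cinn (kt m) (T (kt m)))"])
    fix F :: "nat set" assume "F \<in> {F. F \<subseteq> UNIV \<and> finite F}"
    hence F: "finite F" by simp
    then obtain k where k: "F \<subseteq> {..<k}" by (meson finite_nat_iff_bounded subset_eq lessThan_iff)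
    have "(\<Sum>j\<in>F. (norm (wseq T j))\<^sup>2) \<le> (\<Sum>j<k. (norm (wseq T j))\<^sup>2)"
      by (rule sum_mono2) (use k in auto)
    also have "\<dots> = (\<Sum>j<k. \<Sum>m. (cmod (vec_of (wseq T j) m))\<^sup>2)" by (simp add: norm_sq_ell2)
    also have "\<dots> = (\<Sum>m. \<Sum>j<k. (cmod (vec_of (wseq T j) m))\<^sup>2)"
      by (rule suminf_sum[symmetric]) simp
    also have "\<dots> \<le> (\<Sum>m. Re (cinn (kt m) (T (kt m))))"
    proof (rule suminf_le[OF _ _ D])
      show "\<And>n. (\<Sum>j<k. (cmod (vec_of (wseq T j) n))\<^sup>2) \<le> Re (cinn (kt n) (T (kt n)))"
        by (rule peel_diag[OF P])
      show "summable (\<lambda>m. \<Sum>j<k. (cmod (vec_of (wseq T j) m))\<^sup>2)"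
        by (intro summable_sum) simp
    qed
    finally show "(\<Sum>j\<in>F. (norm (wseq T j))\<^sup>2) \<le> (\<Sum>m. Re (cinn (kt m) (T (kt m))))" .
  qed
qed auto

theorem decomposition:
  assumes P: "posop T" and D: "summable (\<lambda>m. Re (cinn (kt m) (T (kt m))))"
  shows "hs (wseq T) \<and> (\<forall>x. T x = Dop (wseq T) x)"
proof (intro conjI allI)
  show hsw: "hs (wseq T)" by (rule wseq_hs[OF P D])
  fix x
  have "(\<lambda>k. T x - Rseq T k x) \<longlonglongrightarrow> T x - 0" by (intro tendsto_intros Rseq_tendsto[OF P])
  hence "(\<lambda>k. \<Sum>j<k. rk (wseq T j) x) \<longlonglongrightarrow> T x" by (simp add: Rseq_sum)
  moreover have "(\<lambda>j. rk (wseq T j) x) sums Dop (wseq T) x"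
    by (rule has_sum_imp_sums[OF Dop_has_sum[OF hsw]])
  hence "(\<lambda>k. \<Sum>j<k. rk (wseq T j) x) \<longlonglongrightarrow> Dop (wseq T) x" by (simp add: sums_def)
  ultimately show "T x = Dop (wseq T) x" using LIMSEQ_unique by blast
qed

lemma wseq_coord:
  assumes P: "posop T" and z: "\<forall>x. vec_of (T x) n = 0"
  shows "vec_of (wseq T k) n = 0"
proof -
  have "\<forall>x. vec_of (Rseq T k x) n = 0"
  proof (induction k)
    case 0 thus ?case using z by simp
  next
    case (Suc k) thus ?case by (simp add: rk_def wof_def)
  qed
  thus ?thesis by (simp add: wseq_def wof_def)
qed


lemma parallelogram: "(norm (u + v))\<^sup>2 + (norm (u - v))\<^sup>2 = 2 * (norm u)\<^sup>2 + 2 * (norm v)\<^sup>2"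
  for u v :: "'a::real_inner"
  by (simp add: power2_norm_eq_inner inner_add_left inner_add_right inner_diff_left inner_diff_right inner_commute)

lemma norm_sq_diff_csc:
  "(norm (w - csc t s))\<^sup>2 = (norm w)\<^sup>2 - 2 * Re (t * cinn w s) + (cmod t)\<^sup>2 * (norm s)\<^sup>2"
proof -
  have "cinn (w - csc t s) (w - csc t s) = cinn w w - t * cinn w s - cnj t * cinn s w + cnj t * t * cinn s s"
    by (simp add: cinn_diff_left cinn_diff_right cinn_csc_left cinn_csc_right algebra_simps)
  also have "cinn s w = cnj (cinn w s)" by (rule cinn_commute)
  finally have e: "cinn (w - csc t s) (w - csc t s) = cinn w w - t * cinn w s - cnj (t * cinn w s) + cnj t * t * cinn s s"
    by simp
  have "Re (cnj t * t * cinn s s) = (cmod t)\<^sup>2 * (norm s)\<^sup>2"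
    by (simp only: cnj_mult_self cinn_self of_real_mult[symmetric] Re_complex_of_real)
  thus ?thesis using e by (simp add: norm_sq_cinn)
qed

lemma orth_vector:
  fixes S :: "ell2 set"
  assumes S0: "0 \<in> S" and Sadd: "\<And>a b. a \<in> S \<Longrightarrow> b \<in> S \<Longrightarrow> a + b \<in> S"
    and Ssc: "\<And>c a. a \<in> S \<Longrightarrow> csc c a \<in> S"
    and far: "\<And>s. s \<in> S \<Longrightarrow> norm (s - y) \<ge> \<epsilon>" and eps: "\<epsilon> > 0"
  shows "\<exists>w. w \<noteq> 0 \<and> (\<forall>s\<in>S. cinn w s = 0) \<and>
             (\<forall>n. (\<forall>s\<in>S. vec_of s n = 0) \<longrightarrow> vec_of y n = 0 \<longrightarrow> vec_of w n = 0)"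
proof -
  define D where "D = (\<lambda>s. (norm (s - y))\<^sup>2) ` S"
  define d where "d = Inf D"
  have Dne: "D \<noteq> {}" using S0 unfolding D_def by blast
  have Dbdd: "bdd_below D" unfolding D_def by (rule bdd_belowI[of _ 0]) auto
  have dle: "d \<le> (norm (s - y))\<^sup>2" if "s \<in> S" for s
    unfolding d_def D_def using Dbdd that by (intro cInf_lower) (auto simp: D_def)
  have "\<forall>k. \<exists>s. s \<in> S \<and> (norm (s - y))\<^sup>2 < d + 1 / (Suc k)"
  proof
    fix k
    have "d < d + 1 / Suc k" by simp
    then obtain x where "x \<in> D" "x < d + 1 / Suc k" using cInf_lessD[OF Dne] unfolding d_def by blast
    thus "\<exists>s. s \<in> S \<and> (norm (s - y))\<^sup>2 < d + 1 / (Suc k)" by (auto simp: D_def)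
  qed
  then obtain sk where sk: "\<And>k. sk k \<in> S" "\<And>k. (norm (sk k - y))\<^sup>2 < d + 1 / (Suc k)"
    by metis
  have mid: "csc (1/2) (sk i + sk j) \<in> S" for i j by (intro Ssc Sadd sk)
  have cb: "(norm (sk i - sk j))\<^sup>2 \<le> 2 / Suc i + 2 / Suc j" for i j
  proof -
    define u where "u = sk i - y"
    define v where "v = sk j - y"
    have "u + v = 2 *\<^sub>R (csc (1/2) (sk i + sk j) - y)"
      unfolding u_def v_def by (rule ell2_eqI) (simp add: algebra_simps)
    hence "(norm (u + v))\<^sup>2 = 4 * (norm (csc (1/2) (sk i + sk j) - y))\<^sup>2"
      by (simp add: power_mult_distrib)
    hence uv: "(norm (u + v))\<^sup>2 \<ge> 4 * d" using dle[OF mid] by simp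
    have "(norm (u - v))\<^sup>2 = 2 * (norm u)\<^sup>2 + 2 * (norm v)\<^sup>2 - (norm (u + v))\<^sup>2"
      using parallelogram[of u v] by simp
    also have "\<dots> \<le> 2 * (d + 1 / Suc i) + 2 * (d + 1 / Suc j) - 4 * d"
      using sk(2)[of i] sk(2)[of j] uv unfolding u_def v_def by simp
    finally show ?thesis by (simp add: u_def v_def)
  qed
  have "Cauchy sk"
  proof (rule metric_CauchyI)
    fix e :: real assume e: "e > 0"
    obtain N :: nat where N: "4 / e\<^sup>2 < N" using reals_Archimedean2 by blast
    show "\<exists>M. \<forall>m\<ge>M. \<forall>n\<ge>M. dist (sk m) (sk n) < e"
    proof (intro exI allI impI)
      fix i j assume i: "N \<le> i" and j: "N \<le> j"
      have Npos: "real N > 0" using N e by (smt (verit) divide_pos_pos zero_less_power)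
      have "2 / real (Suc i) \<le> 2 / real (Suc N)" using i by (intro divide_left_mono) auto
      moreover have "2 / real (Suc j) \<le> 2 / real (Suc N)" using j by (intro divide_left_mono) auto
      ultimately have "(norm (sk i - sk j))\<^sup>2 \<le> 4 / real (Suc N)" using cb[of i j] by simp
      also have "\<dots> < 4 / real N" using Npos by (intro divide_strict_left_mono) auto
      also have "\<dots> < e\<^sup>2" using N e Npos by (simp add: divide_less_eq mult.commute)
      finally have "(norm (sk i - sk j))\<^sup>2 < e\<^sup>2" .
      hence "norm (sk i - sk j) < e" using e by (simp add: power_less_imp_less_base)
      thus "dist (sk i) (sk j) < e" by (simp add: dist_norm)
    qed
  qed
  then obtain p where p: "sk \<longlonglongrightarrow> p" using Cauchy_convergent_iff convergent_def by blast
  define w where "w = y - p"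
  have lim_inS: "d \<le> (norm (p + csc t s - y))\<^sup>2" if s: "s \<in> S" for s t
  proof (rule LIMSEQ_le_const)
    show "(\<lambda>k. (norm (sk k + csc t s - y))\<^sup>2) \<longlonglongrightarrow> (norm (p + csc t s - y))\<^sup>2"
      by (intro tendsto_intros p)
    show "\<exists>N. \<forall>n\<ge>N. d \<le> (norm (sk n + csc t s - y))\<^sup>2"
      using dle sk(1) Sadd Ssc s by blast
  qed
  have wd1: "d \<le> (norm w)\<^sup>2" using lim_inS[OF S0, of 0] by (simp add: w_def norm_minus_commute)
  have wd2: "(norm w)\<^sup>2 \<le> d"
  proof (rule LIMSEQ_le)
    show "(\<lambda>k. (norm (sk k - y))\<^sup>2) \<longlonglongrightarrow> (norm w)\<^sup>2"
      unfolding w_def by (subst norm_minus_commute) (intro tendsto_intros p)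
    show "(\<lambda>k. d + 1 / Suc k) \<longlonglongrightarrow> d"
      using tendsto_add[OF tendsto_const LIMSEQ_inverse_real_of_nat, of d] by (simp add: inverse_eq_divide)
    show "\<exists>N. \<forall>n\<ge>N. (norm (sk n - y))\<^sup>2 \<le> d + 1 / Suc n" using sk(2) less_imp_le by blast
  qed
  have dpos: "d \<ge> \<epsilon>\<^sup>2"
  proof -
    have "\<forall>x\<in>D. \<epsilon>\<^sup>2 \<le> x" using far eps by (auto simp: D_def intro!: power_mono)
    thus ?thesis unfolding d_def using Dne by (intro cInf_greatest) auto
  qed
  have wne: "w \<noteq> 0"
  proof
    assume "w = 0" hence "(norm w)\<^sup>2 = 0" by simp
    hence "d \<le> 0" using wd1 by linarith
    thus False using dpos eps by (smt (verit) zero_less_power)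
  qed
  have orth: "cinn w s = 0" if s: "s \<in> S" for s
  proof -
    define a where "a = cinn w s"
    define r where "r = 1 / ((norm s)\<^sup>2 + 1)"
    have np: "(norm s)\<^sup>2 + 1 > 0" by (smt (verit) zero_le_power2)
    have r0: "r > 0" using np by (simp add: r_def)
    have rs: "r * (norm s)\<^sup>2 < 1" unfolding r_def using np by (simp add: divide_less_eq)
    define t where "t = complex_of_real r * cnj a"
    have "(norm w)\<^sup>2 \<le> (norm (w - csc t s))\<^sup>2"
    proof -
      have "w - csc t s = - (p + csc t s - y)" by (simp add: w_def)
      hence "(norm (w - csc t s))\<^sup>2 = (norm (p + csc t s - y))\<^sup>2" by (simp only: norm_minus_cancel)
      thus ?thesis using lim_inS[OF s, of t] wd2 by linarith
    qed
    also have "\<dots> = (norm w)\<^sup>2 - 2 * Re (t * a) + (cmod t)\<^sup>2 * (norm s)\<^sup>2"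
      by (simp add: norm_sq_diff_csc a_def)
    also have "t * a = complex_of_real (r * (cmod a)\<^sup>2)"
      by (simp only: t_def mult.assoc cnj_mult_self of_real_mult)
    also have "(cmod t)\<^sup>2 = r\<^sup>2 * (cmod a)\<^sup>2"
      using r0 by (simp add: t_def norm_mult power_mult_distrib)
    finally have "0 \<le> (cmod a)\<^sup>2 * r * (r * (norm s)\<^sup>2 - 2)"
      by (simp add: power2_eq_square algebra_simps)
    moreover have "r * (r * (norm s)\<^sup>2 - 2) < 0" using r0 rs by (simp add: mult_pos_neg)
    ultimately have "(cmod a)\<^sup>2 \<le> 0"
      by (smt (verit) mult.assoc mult_nonneg_nonneg zero_le_power2 mult_le_0_iff)
    thus ?thesis by (simp add: a_def)
  qed
  have coord: "vec_of w n = 0" if "\<forall>s\<in>S. vec_of s n = 0" "vec_of y n = 0" for n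
  proof -
    have "(\<lambda>k. vec_of (sk k) n) \<longlonglongrightarrow> vec_of p n" by (rule tendsto_coord[OF p])
    moreover have "(\<lambda>k. vec_of (sk k) n) = (\<lambda>k. 0)" using that(1) sk(1) by auto
    ultimately have "vec_of p n = 0" using LIMSEQ_unique tendsto_const by metis
    thus ?thesis using that(2) by (simp add: w_def)
  qed
  show ?thesis using wne orth coord by blast
qed


context kfam begin

lemma pairs_partial:
  assumes g: "hs g" and Q: "finite Q"
  shows "(\<Sum>q\<in>Q. (norm (A (fst q) (g (snd q))))\<^sup>2) \<le> c * hsn g"
proof -
  have "(\<Sum>q\<in>Q. (norm (A (fst q) (g (snd q))))\<^sup>2) \<le> (\<Sum>q\<in>fst ` Q \<times> snd ` Q. (norm (A (fst q) (g (snd q))))\<^sup>2)"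
    by (rule sum_mono2) (use Q in \<open>auto simp: finite_cartesian_product intro: rev_image_eqI\<close>)
  also have "\<dots> = (\<Sum>i\<in>fst ` Q. \<Sum>j\<in>snd ` Q. (norm (A i (g j)))\<^sup>2)"
    by (subst sum.cartesian_product) (simp add: case_prod_unfold)
  also have "\<dots> = (\<Sum>j\<in>snd ` Q. \<Sum>i\<in>fst ` Q. (norm (A i (g j)))\<^sup>2)" by (rule sum.swap)
  also have "\<dots> \<le> (\<Sum>j\<in>snd ` Q. c * (norm (g j))\<^sup>2)"
    by (rule sum_mono) (rule bnd, use Q in auto)
  also have "\<dots> = c * (\<Sum>j\<in>snd ` Q. (norm (g j))\<^sup>2)" by (simp add: sum_distrib_left)
  also have "\<dots> \<le> c * hsn g"
    using g c_nonneg unfolding hs_def hsn_def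
    by (intro mult_left_mono finite_sum_le_infsum) (use Q in auto)
  finally show ?thesis .
qed

lemma hsn_step:
  assumes g: "hs g" shows "hsn (step g) \<le> c * hsn g"
  unfolding hsn_def[of "step g"]
proof (rule infsum_le_finite_sums)
  show "(\<lambda>p. (norm (step g p))\<^sup>2) summable_on UNIV" using hs_step[OF g] by (simp add: hs_def)
  fix F :: "(nat list \<times> 'a) set" assume F: "finite F" and "F \<subseteq> UNIV"
  define Q where "Q = hcons -` F"
  have Qf: "finite Q" unfolding Q_def by (rule finite_vimageI[OF F inj_hcons])
  have "(\<Sum>p\<in>F. (norm (step g p))\<^sup>2) = (\<Sum>p\<in>F \<inter> range hcons. (norm (step g p))\<^sup>2)"
    by (rule sum.mono_neutral_right) (use F step_out in force)+
  also have "F \<inter> range hcons = hcons ` Q" unfolding Q_def by auto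
  also have "(\<Sum>p\<in>hcons ` Q. (norm (step g p))\<^sup>2) = (\<Sum>q\<in>Q. (norm (step g (hcons q)))\<^sup>2)"
    using sum.reindex[OF inj_on_subset[OF inj_hcons, of Q], of "\<lambda>p. (norm (step g p))\<^sup>2"] by (simp add: comp_def)
  also have "\<dots> = (\<Sum>q\<in>Q. (norm (A (fst q) (g (snd q))))\<^sup>2)" by (simp add: step_hcons')
  also have "\<dots> \<le> c * hsn g" by (rule pairs_partial[OF g Qf])
  finally show "(\<Sum>p\<in>F. (norm (step g p))\<^sup>2) \<le> c * hsn g" .
qed

end

definition VI :: "nat set \<Rightarrow> ell2 set" where
  "VI I = {x. \<forall>n. n \<notin> I \<longrightarrow> vec_of x n = 0}"

lemma l2_imp: "x \<in> l2 I \<Longrightarrow> vec_of (mk_ell2 x) = x"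
  unfolding l2_def by (auto simp: mk_ell2_inverse)

lemma l2_VI: "x \<in> l2 I \<Longrightarrow> mk_ell2 x \<in> VI I"
  using l2_imp unfolding VI_def l2_def by auto

lemma VI_l2: "h \<in> VI I \<Longrightarrow> vec_of h \<in> l2 I"
  unfolding VI_def l2_def by auto

lemma vec_of_l2_iff: "vec_of h \<in> l2 I \<longleftrightarrow> h \<in> VI I"
  unfolding VI_def l2_def by auto

lemma mk_vec [simp]: "mk_ell2 (vec_of h) = h" by (rule vec_of_inverse)

lemma inner_l2_vec: "inner_l2 (vec_of a) (vec_of b) = cinn a b"
  by (simp add: inner_l2_def cinn_def)

lemma norm_l2_vec: "norm_l2 (vec_of a) = norm a"
  by transfer (simp add: norm_l2_def)

lemma ket_kt: "ket m = vec_of (kt m)"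
  by (simp add: ket_def vec_of_kt fun_eq_iff)

lemma diff_vec: "(\<lambda>n. vec_of a n - vec_of b n) = vec_of (a - b)" by (simp add: fun_eq_iff)

lemma VI_add: "a \<in> VI I \<Longrightarrow> b \<in> VI I \<Longrightarrow> a + b \<in> VI I" by (simp add: VI_def)
lemma VI_diff: "a \<in> VI I \<Longrightarrow> b \<in> VI I \<Longrightarrow> a - b \<in> VI I" by (simp add: VI_def)
lemma VI_csc: "a \<in> VI I \<Longrightarrow> csc c a \<in> VI I" by (simp add: VI_def)
lemma VI_zero: "0 \<in> VI I" by (simp add: VI_def)
lemma VI_sum: "(\<And>a. a \<in> F \<Longrightarrow> f a \<in> VI I) \<Longrightarrow> sum f F \<in> VI I"
  by (induction F rule: infinite_finite_induct) (auto simp: VI_zero VI_add)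

lemma VI_limit: "(\<And>k. X k \<in> VI I) \<Longrightarrow> X \<longlonglongrightarrow> L \<Longrightarrow> L \<in> VI I"
proof -
  assume X: "\<And>k. X k \<in> VI I" and L: "X \<longlonglongrightarrow> L"
  { fix n assume n: "n \<notin> I"
    have "(\<lambda>k. vec_of (X k) n) \<longlonglongrightarrow> vec_of L n" by (rule tendsto_coord[OF L])
    moreover have "(\<lambda>k. vec_of (X k) n) = (\<lambda>k. 0)" using X n by (auto simp: VI_def)
    ultimately have "vec_of L n = 0" using LIMSEQ_unique tendsto_const by metis }
  thus ?thesis by (simp add: VI_def)
qed

definition PI :: "nat set \<Rightarrow> ell2 \<Rightarrow> ell2" where
  "PI I h = mk_ell2 (\<lambda>n. if n \<in> I then vec_of h n else 0)"

lemma vec_of_PI: "vec_of (PI I h) n = (if n \<in> I then vec_of h n else 0)"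
proof -
  have "summable (\<lambda>n. (cmod (if n \<in> I then vec_of h n else 0))\<^sup>2)"
  proof (rule summable_comparison_test'[where g="\<lambda>n. (cmod (vec_of h n))\<^sup>2" and N=0])
    fix n show "norm ((cmod (if n \<in> I then vec_of h n else 0))\<^sup>2) \<le> (cmod (vec_of h n))\<^sup>2"
      by (cases "n \<in> I") auto
  qed simp
  thus ?thesis unfolding PI_def by (simp add: mk_ell2_inverse)
qed

lemma PI_VI: "PI I h \<in> VI I" by (simp add: VI_def vec_of_PI)
lemma PI_id: "h \<in> VI I \<Longrightarrow> PI I h = h" by (rule ell2_eqI) (auto simp: vec_of_PI VI_def)

lemma norm_PI: "norm (PI I h) \<le> norm h"
proof -
  have "(norm (PI I h))\<^sup>2 \<le> (norm h)\<^sup>2"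
    unfolding norm_sq_ell2
  proof (rule suminf_le)
    fix n show "(cmod (vec_of (PI I h) n))\<^sup>2 \<le> (cmod (vec_of h n))\<^sup>2" by (simp add: vec_of_PI)
  qed (rule sq_summ)+
  thus ?thesis by (rule power2_le_imp_le) simp
qed

lemma cinn_PI: "b \<in> VI I \<Longrightarrow> cinn (PI I a) b = cinn a b"
  unfolding cinn_def by (rule arg_cong[where f=suminf]) (auto simp: vec_of_PI VI_def fun_eq_iff)

definition lift :: "nat set \<Rightarrow> op \<Rightarrow> ell2 \<Rightarrow> ell2" where
  "lift I T h = mk_ell2 (T (vec_of (PI I h)))"

lemma bop_l2: "bounded_op I T \<Longrightarrow> x \<in> l2 I \<Longrightarrow> T x \<in> l2 I" by (simp add: bounded_op_def)

lemma bop_lin: "bounded_op I T \<Longrightarrow> x \<in> l2 I \<Longrightarrow> y \<in> l2 I \<Longrightarrow>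
   T (\<lambda>n. a * x n + b * y n) = (\<lambda>n. a * T x n + b * T y n)" by (simp add: bounded_op_def)

lemma bop_zero: "bounded_op I T \<Longrightarrow> T (\<lambda>n. 0) = (\<lambda>n. 0)"
proof -
  assume T: "bounded_op I T"
  have z: "(\<lambda>n. 0::complex) \<in> l2 I" by (simp add: l2_def)
  show ?thesis using bop_lin[OF T z z, of 0 0] by simp
qed

lemma vec_of_lift: "bounded_op I T \<Longrightarrow> vec_of (lift I T h) = T (vec_of (PI I h))"
  unfolding lift_def by (rule l2_imp[of _ I], rule bop_l2) (auto intro: VI_l2 PI_VI)

lemma vec_of_lift_VI: "bounded_op I T \<Longrightarrow> h \<in> VI I \<Longrightarrow> vec_of (lift I T h) = T (vec_of h)"
  by (simp add: vec_of_lift PI_id)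

lemma lift_VI: "bounded_op I T \<Longrightarrow> lift I T h \<in> VI I"
proof -
  assume T: "bounded_op I T"
  have "vec_of (lift I T h) \<in> l2 I" unfolding vec_of_lift[OF T] by (rule bop_l2[OF T VI_l2[OF PI_VI]])
  thus ?thesis by (simp add: vec_of_l2_iff)
qed

lemma PI_add: "PI I (x + y) = PI I x + PI I y" by (rule ell2_eqI) (simp add: vec_of_PI)
lemma PI_csc: "PI I (csc c x) = csc c (PI I x)" by (rule ell2_eqI) (simp add: vec_of_PI)

lemma lift_clin:
  assumes T: "bounded_op I T"
  shows "clin (lift I T)"
proof -
  obtain C where C: "\<forall>x\<in>l2 I. norm_l2 (T x) \<le> C * norm_l2 x" using T by (auto simp: bounded_op_def)
  have l2P: "vec_of (PI I h) \<in> l2 I" for h by (rule VI_l2[OF PI_VI])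
  show ?thesis
  proof (rule clinI[where K="\<bar>C\<bar>"])
    fix x y
    have "vec_of (PI I (x + y)) = (\<lambda>n. 1 * vec_of (PI I x) n + 1 * vec_of (PI I y) n)"
      by (simp add: PI_add fun_eq_iff)
    hence "T (vec_of (PI I (x + y))) = (\<lambda>n. 1 * T (vec_of (PI I x)) n + 1 * T (vec_of (PI I y)) n)"
      using bop_lin[OF T l2P l2P, of 1 x 1 y] by (simp only:)
    thus "lift I T (x + y) = lift I T x + lift I T y"
      by (intro ell2_eqI) (simp add: vec_of_lift[OF T])
  next
    fix c x
    have "vec_of (PI I (csc c x)) = (\<lambda>n. c * vec_of (PI I x) n + 0 * vec_of (PI I x) n)"
      by (simp add: PI_csc fun_eq_iff)
    hence "T (vec_of (PI I (csc c x))) = (\<lambda>n. c * T (vec_of (PI I x)) n + 0 * T (vec_of (PI I x)) n)"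
      using bop_lin[OF T l2P l2P, of c x 0 x] by (simp only:)
    thus "lift I T (csc c x) = csc c (lift I T x)"
      by (intro ell2_eqI) (simp add: vec_of_lift[OF T])
  next
    fix x
    have "norm (lift I T x) = norm_l2 (T (vec_of (PI I x)))"
      by (simp add: vec_of_lift[OF T, symmetric] norm_l2_vec)
    also have "\<dots> \<le> C * norm_l2 (vec_of (PI I x))" using C l2P by blast
    also have "\<dots> \<le> \<bar>C\<bar> * norm (PI I x)" unfolding norm_l2_vec by (intro mult_right_mono) auto
    also have "\<dots> \<le> \<bar>C\<bar> * norm x" by (intro mult_left_mono norm_PI) auto
    finally show "norm (lift I T x) \<le> norm x * \<bar>C\<bar>" by (simp add: mult.commute)
  qed
qed

lemma lift_kt_out: "bounded_op I T \<Longrightarrow> m \<notin> I \<Longrightarrow> lift I T (kt m) = 0"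
proof -
  assume T: "bounded_op I T" and m: "m \<notin> I"
  have "PI I (kt m) = 0" by (rule ell2_eqI) (use m in \<open>auto simp: vec_of_PI vec_of_kt\<close>)
  have "vec_of (lift I T (kt m)) = T (vec_of (PI I (kt m)))" by (rule vec_of_lift[OF T])
  also have "\<dots> = T (\<lambda>n. 0)" using \<open>PI I (kt m) = 0\<close> by (simp only: vec_of_zero)
  also have "\<dots> = (\<lambda>n. 0)" by (rule bop_zero[OF T])
  also have "\<dots> = vec_of 0" by (simp only: vec_of_zero)
  finally show ?thesis using vec_of_inject by blast
qed

lemma adj_vec:
  assumes T: "bounded_op I T"
  shows "adj I T (vec_of h) = vec_of (adjv (lift I T) h)"
proof -
  have L: "clin (lift I T)" by (rule lift_clin[OF T])
  show ?thesis
  proof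
    fix m
    show "adj I T (vec_of h) m = vec_of (adjv (lift I T) h) m"
    proof (cases "m \<in> I")
      case True
      have "kt m \<in> VI I" using True by (auto simp: VI_def vec_of_kt)
      hence "T (ket m) = vec_of (lift I T (kt m))" by (simp add: ket_kt vec_of_lift_VI[OF T])
      thus ?thesis using True by (simp add: adj_def inner_l2_vec vec_of_adjv[OF L])
    next
      case False thus ?thesis by (simp add: adj_def vec_of_adjv[OF L] lift_kt_out[OF T])
    qed
  qed
qed

lemma adjv_lift_VI:
  assumes T: "bounded_op I T"
  shows "adjv (lift I T) h \<in> VI I"
  using lift_kt_out[OF T] by (simp add: VI_def vec_of_adjv[OF lift_clin[OF T]])

lemma op_lim_eq:
  assumes S: "\<And>N. S N x = vec_of (F N)" and F: "F \<longlonglongrightarrow> L" and L: "L \<in> VI I"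
  shows "op_lim I S x = vec_of L"
  unfolding op_lim_def
proof (rule the_equality)
  have "(\<lambda>N. norm (F N - L)) \<longlonglongrightarrow> 0" using F by (simp add: tendsto_norm_zero_iff LIM_zero)
  thus "vec_of L \<in> l2 I \<and> (\<lambda>N. norm_l2 (\<lambda>n. S N x n - vec_of L n)) \<longlonglongrightarrow> 0"
    using L by (simp add: S diff_vec norm_l2_vec VI_l2)
next
  fix y assume y: "y \<in> l2 I \<and> (\<lambda>N. norm_l2 (\<lambda>n. S N x n - y n)) \<longlonglongrightarrow> 0"
  hence yv: "vec_of (mk_ell2 y) = y" using l2_imp by blast
  have "(\<lambda>N. norm (F N - mk_ell2 y)) \<longlonglongrightarrow> 0"
    using y by (metis (no_types, lifting) S diff_vec norm_l2_vec yv ext)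
  hence "F \<longlonglongrightarrow> mk_ell2 y" by (simp add: tendsto_norm_zero_iff LIM_zero_cancel)
  hence "mk_ell2 y = L" using F LIMSEQ_unique by blast
  thus "y = vec_of L" using yv by auto
qed


locale rawset =
  fixes I :: "nat set" and \<alpha> :: "nat \<Rightarrow> op" and c0 :: real
  assumes bdd: "\<And>i. bounded_op I (\<alpha> i)"
    and kb: "\<And>K. finite K \<Longrightarrow>
      positive_op I (\<lambda>x n. complex_of_real c0 * x n - (\<Sum>i\<in>K. adj I (\<alpha> i) (\<alpha> i x) n))"
begin

abbreviation Af :: "nat \<Rightarrow> ell2 \<Rightarrow> ell2" where "Af i \<equiv> lift I (\<alpha> i)"

lemma Af_clin: "clin (Af i)" by (rule lift_clin[OF bdd])

lemma Af_bound:
  assumes F: "finite F"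
  shows "(\<Sum>i\<in>F. (norm (Af i v))\<^sup>2) \<le> max c0 0 * (norm v)\<^sup>2"
proof -
  define u where "u = PI I v"
  have uV: "u \<in> VI I" by (simp add: u_def PI_VI)
  have Au: "Af i v = Af i u" for i
    unfolding u_def lift_def by (simp add: PI_id[OF PI_VI])
  define x where "x = vec_of u"
  have xl2: "x \<in> l2 I" unfolding x_def by (rule VI_l2[OF uV])
  have ax: "\<alpha> i x = vec_of (Af i u)" for i by (simp add: x_def vec_of_lift_VI[OF bdd uV])
  have vecform: "(\<lambda>n. complex_of_real c0 * x n - (\<Sum>i\<in>F. adj I (\<alpha> i) (\<alpha> i x) n))
      = vec_of (csc (complex_of_real c0) u - (\<Sum>i\<in>F. adjv (Af i) (Af i u)))"
    by (simp only: ax adj_vec[OF bdd]) (simp add: x_def fun_eq_iff)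
  have "inner_l2 x (\<lambda>n. complex_of_real c0 * x n - (\<Sum>i\<in>F. adj I (\<alpha> i) (\<alpha> i x) n))
      = cinn u (csc (complex_of_real c0) u - (\<Sum>i\<in>F. adjv (Af i) (Af i u)))"
    by (subst vecform) (simp only: x_def inner_l2_vec)
  also have "\<dots> = complex_of_real c0 * cinn u u - (\<Sum>i\<in>F. cinn (Af i u) (Af i u))"
    by (simp add: cinn_diff_right cinn_csc_right cinn_sum_right adjv_cinn[OF Af_clin, symmetric])
  also have "\<dots> = complex_of_real (c0 * (norm u)\<^sup>2 - (\<Sum>i\<in>F. (norm (Af i u))\<^sup>2))"
    by (simp add: cinn_self)
  finally have e: "inner_l2 x (\<lambda>n. complex_of_real c0 * x n - (\<Sum>i\<in>F. adj I (\<alpha> i) (\<alpha> i x) n))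
      = complex_of_real (c0 * (norm u)\<^sup>2 - (\<Sum>i\<in>F. (norm (Af i u))\<^sup>2))" .
  have "0 \<le> Re (inner_l2 x (\<lambda>n. complex_of_real c0 * x n - (\<Sum>i\<in>F. adj I (\<alpha> i) (\<alpha> i x) n)))"
    using kb[OF F] xl2 unfolding positive_op_def by blast
  hence "0 \<le> c0 * (norm u)\<^sup>2 - (\<Sum>i\<in>F. (norm (Af i u))\<^sup>2)" unfolding e by simp
  hence "(\<Sum>i\<in>F. (norm (Af i v))\<^sup>2) \<le> c0 * (norm u)\<^sup>2" by (simp add: Au)
  also have "\<dots> \<le> max c0 0 * (norm u)\<^sup>2" by (intro mult_right_mono) auto
  also have "\<dots> \<le> max c0 0 * (norm v)\<^sup>2"
    unfolding u_def by (intro mult_left_mono power_mono norm_PI) auto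
  finally show ?thesis .
qed

sublocale K: kfam Af "max c0 0"
  by unfold_locales (auto intro: Af_clin Af_bound)

abbreviation cc :: real where "cc \<equiv> max c0 0"

lemma step_VI: "(\<And>p. g p \<in> VI I) \<Longrightarrow> K.step g p \<in> VI I"
  by (auto simp: K.step_def VI_zero lift_VI[OF bdd] split: list.split)

lemma Dop_VI: "hs g \<Longrightarrow> (\<And>p. g p \<in> VI I) \<Longrightarrow> Dop g u \<in> VI I"
  unfolding VI_def using Dop_coord by blast

lemma kraus_trans:
  fixes g :: "nat list \<times> nat \<Rightarrow> ell2"
  assumes g: "hs g" and gV: "\<And>p. g p \<in> VI I"
    and B: "\<And>x. x \<in> l2 I \<Longrightarrow> B x = vec_of (Dop g (mk_ell2 x))"
  shows "x \<in> l2 I \<Longrightarrow> kraus I \<alpha> B x = vec_of (Dop (K.step g) (mk_ell2 x))"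
proof -
  assume x: "x \<in> l2 I"
  define h where "h = mk_ell2 x"
  have xh: "x = vec_of h" unfolding h_def using l2_imp[OF x] by simp
  have hV: "h \<in> VI I" unfolding h_def by (rule l2_VI[OF x])
  have tm: "\<alpha> i (B (adj I (\<alpha> i) x)) = vec_of (Af i (Dop g (adjv (Af i) h)))" for i
  proof -
    have "adj I (\<alpha> i) x = vec_of (adjv (Af i) h)" by (simp add: xh adj_vec[OF bdd])
    moreover have "vec_of (adjv (Af i) h) \<in> l2 I" by (rule VI_l2[OF adjv_lift_VI[OF bdd]])
    ultimately have "B (adj I (\<alpha> i) x) = vec_of (Dop g (adjv (Af i) h))" using B by simp
    thus ?thesis by (simp add: vec_of_lift_VI[OF bdd Dop_VI[OF g gV]])
  qed
  have "kraus I \<alpha> B x = vec_of (Dop (K.step g) h)"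
    unfolding kraus_def
  proof (rule op_lim_eq)
    fix N
    show "(\<lambda>n. \<Sum>i<N. \<alpha> i (B (adj I (\<alpha> i) x)) n) = vec_of (\<Sum>i<N. Af i (Dop g (adjv (Af i) h)))"
      by (simp add: tm fun_eq_iff)
  next
    show "(\<lambda>N. \<Sum>i<N. Af i (Dop g (adjv (Af i) h))) \<longlonglongrightarrow> Dop (K.step g) h"
      by (rule K.kraus_step[OF g])
    show "Dop (K.step g) h \<in> VI I"
      by (rule Dop_VI[OF K.hs_step[OF g] step_VI[OF gV]])
  qed
  thus ?thesis by (simp add: h_def)
qed

definition g0 :: "(nat \<Rightarrow> ell2) \<Rightarrow> nat list \<times> nat \<Rightarrow> ell2" where
  "g0 w p = (if fst p = [] then w (snd p) else 0)"

definition e0 :: "nat \<Rightarrow> nat list \<times> nat" where "e0 m = ([], m)"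

lemma inj_e0: "inj e0" by (auto simp: inj_def e0_def)
lemma g0_out: "p \<notin> range e0 \<Longrightarrow> g0 w p = 0"
  by (cases p) (auto simp: g0_def e0_def)
lemma g0_e0: "g0 w (e0 m) = w m" by (simp add: g0_def e0_def)

lemma g0_hs: assumes w: "hs w" shows "hs (g0 w)"
proof -
  have "((\<lambda>p. (norm (g0 w p))\<^sup>2) \<circ> e0) summable_on UNIV"
    using w by (simp add: hs_def comp_def g0_e0)
  hence "(\<lambda>p. (norm (g0 w p))\<^sup>2) summable_on range e0"
    using summable_on_reindex[OF inj_on_subset[OF inj_e0], of UNIV] by auto
  thus ?thesis unfolding hs_def
    by (rule summable_on_cong_neutral[THEN iffD1, rotated -1]) (auto simp: g0_out)
qed

lemma g0_Dop: assumes w: "hs w" shows "Dop (g0 w) u = Dop w u"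
proof -
  have "((\<lambda>p. rk (g0 w p) u) has_sum Dop (g0 w) u) UNIV" by (rule Dop_has_sum[OF g0_hs[OF w]])
  hence "((\<lambda>p. rk (g0 w p) u) has_sum Dop (g0 w) u) (range e0)"
    by (rule has_sum_cong_neutral[THEN iffD1, rotated -1]) (auto simp: g0_out)
  hence "(((\<lambda>p. rk (g0 w p) u) \<circ> e0) has_sum Dop (g0 w) u) UNIV"
    using has_sum_reindex[OF inj_on_subset[OF inj_e0], of UNIV] by auto
  hence "((\<lambda>m. rk (w m) u) has_sum Dop (g0 w) u) UNIV" by (simp add: comp_def g0_e0)
  thus ?thesis using Dop_has_sum[OF w, of u] has_sum_unique by blast
qed

definition G :: "(nat \<Rightarrow> ell2) \<Rightarrow> nat \<Rightarrow> nat list \<times> nat \<Rightarrow> ell2" where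
  "G w k = (K.step ^^ k) (g0 w)"

lemma G_Suc: "G w (Suc k) = K.step (G w k)" by (simp add: G_def)
lemma G_0: "G w 0 = g0 w" by (simp add: G_def)

lemma G_props:
  assumes w: "hs w" and wV: "\<And>m. w m \<in> VI I"
  shows "hs (G w k) \<and> (\<forall>p. G w k p \<in> VI I) \<and> hsn (G w k) \<le> cc ^ k * hsn (g0 w)"
proof (induction k)
  case 0
  have "\<forall>p. g0 w p \<in> VI I" using wV by (simp add: g0_def VI_zero)
  thus ?case using g0_hs[OF w] by (simp add: G_0)
next
  case (Suc k)
  hence h: "hs (G w k)" and v: "\<And>p. G w k p \<in> VI I" and b: "hsn (G w k) \<le> cc ^ k * hsn (g0 w)" by auto
  have "hsn (G w (Suc k)) \<le> cc * hsn (G w k)" unfolding G_Suc by (rule K.hsn_step[OF h])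
  also have "\<dots> \<le> cc * (cc ^ k * hsn (g0 w))" by (intro mult_left_mono b) auto
  finally have b': "hsn (G w (Suc k)) \<le> cc ^ Suc k * hsn (g0 w)" by (simp add: mult.assoc)
  have sv: "\<forall>p. K.step (G w k) p \<in> VI I" using step_VI[of "G w k"] v by blast
  show ?case using K.hs_step[OF h] sv b' by (simp add: G_Suc)
qed

lemma C1_lift:
  assumes A: "C1 I A"
  shows "posop (lift I A)" "summable (\<lambda>m. Re (cinn (kt m) (lift I A (kt m))))"
    "\<And>x. x \<in> l2 I \<Longrightarrow> A x = vec_of (lift I A (mk_ell2 x))"
    "\<And>u. lift I A u \<in> VI I"
proof -
  have Ab: "bounded_op I A" using A by (simp add: C1_def)
  have Ap: "positive_op I A" using A by (simp add: C1_def)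
  show "\<And>x. x \<in> l2 I \<Longrightarrow> A x = vec_of (lift I A (mk_ell2 x))"
    by (simp add: vec_of_lift_VI[OF Ab l2_VI] l2_imp)
  show "\<And>u. lift I A u \<in> VI I" by (rule lift_VI[OF Ab])
  show "posop (lift I A)"
    unfolding posop_def
  proof (intro conjI allI)
    show "clin (lift I A)" by (rule lift_clin[OF Ab])
    fix h
    have "cinn h (lift I A h) = cinn (PI I h) (lift I A h)" by (rule cinn_PI[symmetric, OF lift_VI[OF Ab]])
    also have "\<dots> = inner_l2 (vec_of (PI I h)) (A (vec_of (PI I h)))"
      by (simp add: inner_l2_vec[symmetric] vec_of_lift[OF Ab])
    finally have e: "cinn h (lift I A h) = inner_l2 (vec_of (PI I h)) (A (vec_of (PI I h)))" .
    have l: "vec_of (PI I h) \<in> l2 I" by (rule VI_l2[OF PI_VI])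
    show "cinn h (lift I A h) \<in> \<real>" using Ap l unfolding e positive_op_def by blast
    show "0 \<le> Re (cinn h (lift I A h))" using Ap l unfolding e positive_op_def by blast
  qed
  have diag: "Re (cinn (kt m) (lift I A (kt m))) = (if m \<in> I then Re (inner_l2 (ket m) (A (ket m))) else 0)" for m
  proof (cases "m \<in> I")
    case True
    hence "kt m \<in> VI I" by (auto simp: VI_def vec_of_kt)
    hence "vec_of (lift I A (kt m)) = A (ket m)" by (simp add: vec_of_lift_VI[OF Ab] ket_kt)
    hence "cinn (kt m) (lift I A (kt m)) = inner_l2 (ket m) (A (ket m))"
      by (metis inner_l2_vec ket_kt)
    thus ?thesis using True by simp
  next
    case False thus ?thesis by (simp add: lift_kt_out[OF Ab])
  qed
  show "summable (\<lambda>m. Re (cinn (kt m) (lift I A (kt m))))"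
    unfolding diag using A by (simp add: C1_def)
qed

definition wA :: "op \<Rightarrow> nat \<Rightarrow> ell2" where "wA A = wseq (lift I A)"

lemma wA_props:
  assumes A: "C1 I A"
  shows "hs (wA A)" "\<And>u. lift I A u = Dop (wA A) u" "\<And>m. wA A m \<in> VI I"
proof -
  note L = C1_lift[OF A]
  have D: "hs (wseq (lift I A)) \<and> (\<forall>x. lift I A x = Dop (wseq (lift I A)) x)"
    by (rule decomposition[OF L(1) L(2)])
  show "hs (wA A)" using D by (simp add: wA_def)
  show "\<And>u. lift I A u = Dop (wA A) u" using D by (simp add: wA_def)
  fix m
  show "wA A m \<in> VI I" unfolding VI_def wA_def
  proof (intro allI impI CollectI)
    fix n assume n: "n \<notin> I"
    have "\<forall>x. vec_of (lift I A x) n = 0" using L(4) n by (simp add: VI_def)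
    thus "vec_of (wseq (lift I A) m) n = 0" by (rule wseq_coord[OF L(1)])
  qed
qed

lemma kraus_iter:
  assumes A: "C1 I A"
  shows "x \<in> l2 I \<Longrightarrow> (kraus I \<alpha> ^^ k) A x = vec_of (Dop (G (wA A) k) (mk_ell2 x))"
proof (induction k arbitrary: x)
  case 0
  thus ?case using C1_lift(3)[OF A 0] wA_props(2)[OF A] g0_Dop[OF wA_props(1)[OF A]] by (simp add: G_0)
next
  case (Suc k)
  note P = G_props[OF wA_props(1)[OF A] wA_props(3)[OF A], of k]
  have "kraus I \<alpha> ((kraus I \<alpha> ^^ k) A) x = vec_of (Dop (K.step (G (wA A) k)) (mk_ell2 x))"
    by (rule kraus_trans) (use P Suc in auto)
  thus ?case by (simp add: G_Suc)
qed


lemma exp_conv: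
  assumes A: "C1 I A" and x: "x \<in> l2 I"
  defines "h \<equiv> mk_ell2 x"
  defines "tm \<equiv> \<lambda>k. csc (complex_of_real (1 / fact k)) (Dop (G (wA A) k) h)"
  shows "summable tm" and "exp_kraus I \<alpha> 1 A x = vec_of (suminf tm)"
proof -
  define H where "H = hsn (g0 (wA A))"
  note P = G_props[OF wA_props(1)[OF A] wA_props(3)[OF A]]
  have H0: "H \<ge> 0" unfolding H_def by (rule hsn_nonneg)
  have bnd: "norm (tm k) \<le> inverse (fact k) * cc ^ k * (H * norm h)" for k
  proof -
    have c1: "cmod (complex_of_real (1 / fact k)) = 1 / fact k" by (simp only: norm_of_real) simp
    have "norm (tm k) = (1 / fact k) * norm (Dop (G (wA A) k) h)"
      by (simp only: tm_def norm_csc c1)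
    also have "\<dots> \<le> (1 / fact k) * (hsn (G (wA A) k) * norm h)"
      using P[of k] by (intro mult_left_mono Dop_norm) auto
    also have "\<dots> \<le> (1 / fact k) * ((cc ^ k * H) * norm h)"
      using P[of k] by (intro mult_left_mono mult_right_mono) (auto simp: H_def)
    finally show ?thesis by (simp add: inverse_eq_divide mult_ac)
  qed
  have sg: "summable (\<lambda>k. inverse (fact k) * cc ^ k * (H * norm h))"
    by (intro summable_mult2 summable_exp)
  show st: "summable tm"
    by (rule summable_comparison_test'[OF sg, where N=0]) (use bnd in auto)
  have psV: "(\<Sum>k<N. tm k) \<in> VI I" for N
    unfolding tm_def by (intro VI_sum VI_csc Dop_VI) (use P in auto)
  show "exp_kraus I \<alpha> 1 A x = vec_of (suminf tm)"
    unfolding exp_kraus_def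
  proof (rule op_lim_eq)
    fix N
    show "(\<lambda>n. \<Sum>k<N. complex_of_real (1 ^ k / fact k) * (kraus I \<alpha> ^^ k) A x n) = vec_of (\<Sum>k<N. tm k)"
      by (simp add: fun_eq_iff tm_def kraus_iter[OF A x] h_def)
  next
    show "(\<lambda>N. \<Sum>k<N. tm k) \<longlonglongrightarrow> suminf tm" by (rule summable_LIMSEQ[OF st])
    thus "suminf tm \<in> VI I" by (rule VI_limit[OF psV])
  qed
qed

definition Fq :: "op \<Rightarrow> nat \<Rightarrow> ell2 \<Rightarrow> real" where
  "Fq A k h = infsum (\<lambda>p. (cmod (cinn (G (wA A) k p) h))\<^sup>2) UNIV"

lemma exp_form:
  assumes A: "C1 I A" and x: "x \<in> l2 I"
  defines "h \<equiv> mk_ell2 x"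
  shows "summable (\<lambda>k. (1 / fact k) * Fq A k h)"
    and "inner_l2 x (exp_kraus I \<alpha> 1 A x) = complex_of_real (\<Sum>k. (1 / fact k) * Fq A k h)"
    and "\<And>k. Fq A k h \<ge> 0"
proof -
  define tm where "tm = (\<lambda>k. csc (complex_of_real (1 / fact k)) (Dop (G (wA A) k) h))"
  note E = exp_conv[OF A x, folded h_def, folded tm_def]
  define H where "H = hsn (g0 (wA A))"
  note P = G_props[OF wA_props(1)[OF A] wA_props(3)[OF A]]
  show F0: "\<And>k. Fq A k h \<ge> 0" unfolding Fq_def by (rule infsum_nonneg) auto
  have Fb: "Fq A k h \<le> hsn (G (wA A) k) * (norm h)\<^sup>2" for k
  proof -
    have hsk: "hs (G (wA A) k)" using P by auto
    have "Fq A k h \<le> infsum (\<lambda>p. (norm (G (wA A) k p))\<^sup>2 * (norm h)\<^sup>2) UNIV"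
      unfolding Fq_def
    proof (rule infsum_mono)
      show "(\<lambda>p. (cmod (cinn (G (wA A) k p) h))\<^sup>2) summable_on UNIV" by (rule form_summable[OF hsk])
      show "(\<lambda>p. (norm (G (wA A) k p))\<^sup>2 * (norm h)\<^sup>2) summable_on UNIV"
        using hsk unfolding hs_def by (rule summable_on_cmult_left)
      fix p
      have "cmod (cinn (G (wA A) k p) h) \<le> norm (G (wA A) k p) * norm h" by (rule cauchy_schwarz_c)
      hence "(cmod (cinn (G (wA A) k p) h))\<^sup>2 \<le> (norm (G (wA A) k p) * norm h)\<^sup>2" by (intro power_mono) auto
      thus "(cmod (cinn (G (wA A) k p) h))\<^sup>2 \<le> (norm (G (wA A) k p))\<^sup>2 * (norm h)\<^sup>2"
        by (simp add: power_mult_distrib)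
    qed
    also have "\<dots> = hsn (G (wA A) k) * (norm h)\<^sup>2"
      unfolding hsn_def by (rule infsum_cmult_left) (use hsk in \<open>simp add: hs_def\<close>)
    finally show ?thesis .
  qed
  have ab: "(1 / fact k) * Fq A k h \<le> inverse (fact k) * cc ^ k * (H * (norm h)\<^sup>2)" for k
  proof -
    have "(1 / fact k) * Fq A k h \<le> (1 / fact k) * (hsn (G (wA A) k) * (norm h)\<^sup>2)"
      using Fb[of k] by (intro mult_left_mono) auto
    also have "\<dots> \<le> (1 / fact k) * ((cc ^ k * H) * (norm h)\<^sup>2)"
      using P[of k] by (intro mult_left_mono mult_right_mono) (auto simp: H_def)
    finally show ?thesis by (simp add: inverse_eq_divide mult_ac)
  qed
  have sg: "summable (\<lambda>k. inverse (fact k) * cc ^ k * (H * (norm h)\<^sup>2))"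
    by (intro summable_mult2 summable_exp)
  show sa: "summable (\<lambda>k. (1 / fact k) * Fq A k h)"
    by (rule summable_comparison_test'[OF sg, where N=0]) (use ab F0 in auto)
  have xh: "x = vec_of h" unfolding h_def using l2_imp[OF x] by simp
  have "inner_l2 x (exp_kraus I \<alpha> 1 A x) = cinn h (suminf tm)"
    unfolding E(2) by (subst xh) (rule inner_l2_vec)
  also have "\<dots> = (\<Sum>k. cinn h (tm k))"
    by (rule bounded_linear.suminf[OF bounded_linear_cinn_right E(1)])
  also have "\<dots> = (\<Sum>k. complex_of_real ((1 / fact k) * Fq A k h))"
  proof (rule arg_cong[where f=suminf], rule ext)
    fix k
    have hsk: "hs (G (wA A) k)" using P by auto
    show "cinn h (tm k) = complex_of_real ((1 / fact k) * Fq A k h)"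
      by (simp add: tm_def cinn_csc_right Dop_form[OF hsk] Fq_def)
  qed
  also have "\<dots> = complex_of_real (\<Sum>k. (1 / fact k) * Fq A k h)"
    by (rule suminf_of_real[symmetric, OF sa])
  finally show "inner_l2 x (exp_kraus I \<alpha> 1 A x) = complex_of_real (\<Sum>k. (1 / fact k) * Fq A k h)" .
qed

primrec Awadj :: "nat list \<Rightarrow> ell2 \<Rightarrow> ell2" where
  "Awadj [] h = h"
| "Awadj (i # ws) h = Awadj ws (adjv (Af i) h)"

lemma Awadj_clin: "clin (Awadj ws)"
proof (induction ws)
  case Nil
  have "Awadj [] = id" by (simp add: fun_eq_iff)
  thus ?case using clin_id by metis
next
  case (Cons i ws)
  have "Awadj (i # ws) = Awadj ws \<circ> adjv (Af i)" by (simp add: fun_eq_iff)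
  thus ?case using clin_comp[OF Cons adjv_clin[OF Af_clin]] by metis
qed

lemma G_cinn:
  "cinn (G w k (ws, m)) h = (if length ws = k then cinn (w m) (Awadj ws h) else 0)"
proof (induction k arbitrary: ws h)
  case 0 thus ?case by (cases ws) (auto simp: G_0 g0_def)
next
  case (Suc k)
  show ?case
  proof (cases ws)
    case Nil thus ?thesis by (simp add: G_Suc K.step_def)
  next
    case (Cons i ws')
    have "cinn (G w (Suc k) (ws, m)) h = cinn (Af i (G w k (ws', m))) h"
      by (simp add: G_Suc K.step_def Cons)
    also have "\<dots> = cinn (G w k (ws', m)) (adjv (Af i) h)" by (rule adjv_cinn[OF Af_clin])
    also have "\<dots> = (if length ws' = k then cinn (w m) (Awadj ws' (adjv (Af i) h)) else 0)"
      by (rule Suc)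
    finally show ?thesis by (simp add: Cons)
  qed
qed

lemma Dop_zero:
  assumes w: "hs w" and z: "\<And>m. cinn (w m) u = 0"
  shows "Dop w u = 0"
proof -
  have "((\<lambda>m. rk (w m) u) has_sum Dop w u) UNIV" by (rule Dop_has_sum[OF w])
  moreover have "((\<lambda>m. rk (w m) u) has_sum 0) UNIV" by (simp add: rk_def z)
  ultimately show ?thesis using has_sum_unique by blast
qed

definition Zr :: "op \<Rightarrow> (nat \<Rightarrow> complex) set" where
  "Zr A = {x. x \<in> l2 I \<and> (\<forall>ws. lift I A (Awadj ws (mk_ell2 x)) = 0)}"

lemma gen_Zr:
  assumes Ab: "bounded_op I A"
  shows "a \<in> gen_alg I \<alpha> \<Longrightarrow> x \<in> Zr A \<Longrightarrow> a x \<in> Zr A"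
proof (induction arbitrary: x rule: gen_alg.induct)
  case alg_id thus ?case by simp
next
  case (alg_gen i x)
  hence x: "x \<in> l2 I" and k: "\<forall>ws. lift I A (Awadj ws (mk_ell2 x)) = 0" by (auto simp: Zr_def)
  define h where "h = mk_ell2 x"
  have xh: "x = vec_of h" unfolding h_def using l2_imp[OF x] by simp
  have e: "adj I (\<alpha> i) x = vec_of (adjv (Af i) h)" by (simp add: xh adj_vec[OF bdd])
  show ?case unfolding Zr_def e
  proof (intro CollectI conjI allI)
    show "vec_of (adjv (Af i) h) \<in> l2 I" by (rule VI_l2[OF adjv_lift_VI[OF bdd]])
    fix ws
    show "lift I A (Awadj ws (mk_ell2 (vec_of (adjv (Af i) h)))) = 0"
      using k[rule_format, of "i # ws"] by (simp add: h_def)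
  qed
next
  case (alg_add a b x)
  have ax: "a x \<in> Zr A" and bx: "b x \<in> Zr A" using alg_add by auto
  hence la: "a x \<in> l2 I" and lb: "b x \<in> l2 I" by (auto simp: Zr_def)
  have e: "(\<lambda>n. a x n + b x n) = vec_of (mk_ell2 (a x) + mk_ell2 (b x))"
    by (simp add: fun_eq_iff l2_imp[OF la] l2_imp[OF lb])
  have L: "clin (lift I A)" by (rule lift_clin[OF Ab])
  show ?case unfolding Zr_def e
  proof (intro CollectI conjI allI)
    show "vec_of (mk_ell2 (a x) + mk_ell2 (b x)) \<in> l2 I"
      by (intro VI_l2 VI_add l2_VI la lb)
    fix ws
    show "lift I A (Awadj ws (mk_ell2 (vec_of (mk_ell2 (a x) + mk_ell2 (b x))))) = 0"
      using ax bx by (simp add: Zr_def clin_add[OF Awadj_clin] clin_add[OF L])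
  qed
next
  case (alg_scale a c x)
  have ax: "a x \<in> Zr A" using alg_scale by auto
  hence la: "a x \<in> l2 I" by (auto simp: Zr_def)
  have e: "(\<lambda>n. c * a x n) = vec_of (csc c (mk_ell2 (a x)))"
    by (simp add: fun_eq_iff l2_imp[OF la])
  have L: "clin (lift I A)" by (rule lift_clin[OF Ab])
  show ?case unfolding Zr_def e
  proof (intro CollectI conjI allI)
    show "vec_of (csc c (mk_ell2 (a x))) \<in> l2 I" by (intro VI_l2 VI_csc l2_VI la)
    fix ws
    show "lift I A (Awadj ws (mk_ell2 (vec_of (csc c (mk_ell2 (a x)))))) = 0"
      using ax by (simp add: Zr_def clin_csc[OF Awadj_clin] clin_csc[OF L])
  qed
next
  case (alg_mult a b x)
  thus ?case by simp
qed


lemma gen_l2: "a \<in> gen_alg I \<alpha> \<Longrightarrow> x \<in> l2 I \<Longrightarrow> a x \<in> l2 I"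
proof (induction arbitrary: x rule: gen_alg.induct)
  case alg_id thus ?case by simp
next
  case (alg_gen i x)
  have "adj I (\<alpha> i) x = vec_of (adjv (Af i) (mk_ell2 x))"
    using adj_vec[OF bdd, of i "mk_ell2 x"] l2_imp[OF alg_gen] by simp
  thus ?case using VI_l2[OF adjv_lift_VI[OF bdd]] by simp
next
  case (alg_add a b x)
  hence la: "a x \<in> l2 I" and lb: "b x \<in> l2 I" by auto
  have e: "(\<lambda>n. a x n + b x n) = vec_of (mk_ell2 (a x) + mk_ell2 (b x))"
    by (simp add: fun_eq_iff l2_imp[OF la] l2_imp[OF lb])
  show ?case unfolding e by (intro VI_l2 VI_add l2_VI la lb)
next
  case (alg_scale a c x)
  hence la: "a x \<in> l2 I" by auto
  have e: "(\<lambda>n. c * a x n) = vec_of (csc c (mk_ell2 (a x)))"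
    by (simp add: fun_eq_iff l2_imp[OF la])
  show ?case unfolding e by (intro VI_l2 VI_csc l2_VI la)
next
  case (alg_mult a b x) thus ?case by simp
qed

lemma if_dir:
  assumes cyc: "\<forall>x\<in>l2 I. x \<noteq> (\<lambda>n. 0) \<longrightarrow> cyclic I \<alpha> x"
  shows "ergodic I \<alpha>"
  unfolding ergodic_def
proof (intro allI impI)
  fix A assume AA: "C1 I A \<and> (\<exists>x\<in>l2 I. A x \<noteq> (\<lambda>n. 0))"
  hence A: "C1 I A" and ex: "\<exists>x\<in>l2 I. A x \<noteq> (\<lambda>n. 0)" by auto
  have Ab: "bounded_op I A" using A by (simp add: C1_def)
  have L: "clin (lift I A)" by (rule lift_clin[OF Ab])
  have "strictly_positive_op I (exp_kraus I \<alpha> 1 A)"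
    unfolding strictly_positive_op_def
  proof (intro ballI impI)
    fix x assume x: "x \<in> l2 I" and nz: "x \<noteq> (\<lambda>n. 0)"
    define h where "h = mk_ell2 x"
    note EF = exp_form[OF A x, folded h_def]
    note P = G_props[OF wA_props(1)[OF A] wA_props(3)[OF A]]
    have s_pos: "(\<Sum>k. (1 / fact k) * Fq A k h) > 0"
    proof (rule ccontr)
      assume np: "\<not> (\<Sum>k. (1 / fact k) * Fq A k h) > 0"
      have s0: "(\<Sum>k. (1 / fact k) * Fq A k h) \<ge> 0"
        by (rule suminf_nonneg[OF EF(1)]) (use EF(3) in auto)
      hence "(\<Sum>k. (1 / fact k) * Fq A k h) = 0" using np by linarith
      hence "\<forall>k. (1 / fact k) * Fq A k h = 0"
        using suminf_eq_zero_iff[OF EF(1)] EF(3) by auto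
      hence Fz: "Fq A k h = 0" for k by simp
      have cz: "cinn (G (wA A) k p) h = 0" for k p
      proof -
        have hsk: "hs (G (wA A) k)" using P by auto
        have "(\<lambda>p. (cmod (cinn (G (wA A) k p) h))\<^sup>2) p = 0"
          by (rule nonneg_infsum_le_0D[where A=UNIV]) (use Fz[of k] form_summable[OF hsk] in \<open>auto simp: Fq_def\<close>)
        thus ?thesis by simp
      qed
      have wz: "cinn (wA A m) (Awadj ws h) = 0" for ws m
        using cz[of "length ws" "(ws, m)"] G_cinn[of "wA A" "length ws" ws m h] by simp
      have kill: "lift I A (Awadj ws h) = 0" for ws
        using wA_props(2)[OF A] Dop_zero[OF wA_props(1)[OF A] wz] by simp
      have xZ: "x \<in> Zr A" using x kill by (simp add: Zr_def h_def)
      have aZ: "a x \<in> Zr A" if "a \<in> gen_alg I \<alpha>" for a by (rule gen_Zr[OF Ab that xZ])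
      obtain K where K: "K > 0" "\<forall>u. norm (lift I A u) \<le> norm u * K" using clin_bound[OF L] by blast
      have van: "A y = (\<lambda>n. 0)" if y: "y \<in> l2 I" for y
      proof -
        have "lift I A (mk_ell2 y) = 0"
        proof (rule ccontr)
          assume ne: "lift I A (mk_ell2 y) \<noteq> 0"
          define r where "r = norm (lift I A (mk_ell2 y))"
          have r: "r > 0" using ne by (simp add: r_def)
          obtain a where a: "a \<in> gen_alg I \<alpha>" and close: "norm_l2 (\<lambda>n. a x n - y n) < r / K"
            using cyc x nz y r K(1) unfolding cyclic_def by (meson divide_pos_pos)
          have az: "a x \<in> Zr A" by (rule aZ[OF a])
          hence la: "a x \<in> l2 I" and la0: "lift I A (mk_ell2 (a x)) = 0"
            by (auto simp: Zr_def dest: spec[of _ "[]"])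
          have "norm_l2 (\<lambda>n. a x n - y n) = norm (mk_ell2 (a x) - mk_ell2 y)"
            using l2_imp[OF la] l2_imp[OF y] by (metis diff_vec norm_l2_vec)
          hence cl: "norm (mk_ell2 (a x) - mk_ell2 y) < r / K" using close by simp
          have "r = norm (lift I A (mk_ell2 y) - lift I A (mk_ell2 (a x)))" by (simp add: r_def la0)
          also have "\<dots> = norm (lift I A (mk_ell2 y - mk_ell2 (a x)))" by (simp add: clin_diff[OF L])
          also have "\<dots> \<le> norm (mk_ell2 y - mk_ell2 (a x)) * K" using K by blast
          also have "\<dots> = norm (mk_ell2 (a x) - mk_ell2 y) * K" by (simp add: norm_minus_commute)
          also have "\<dots> < r / K * K" using cl K(1) by (intro mult_strict_right_mono) auto
          also have "\<dots> = r" using K(1) by simp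
          finally show False by simp
        qed
        thus ?thesis using C1_lift(3)[OF A y] by simp
      qed
      thus False using ex by blast
    qed
    show "inner_l2 x (exp_kraus I \<alpha> 1 A x) \<in> \<real> \<and> 0 < Re (inner_l2 x (exp_kraus I \<alpha> 1 A x))"
      using EF(2) s_pos by simp
  qed
  thus "\<exists>t>0. strictly_positive_op I (exp_kraus I \<alpha> t A)" by (intro exI[of _ 1]) auto
qed


lemma mk_zero: "mk_ell2 (\<lambda>n. 0) = 0"
  using mk_vec[of 0] by simp

lemma only_if_dir:
  assumes erg: "ergodic I \<alpha>"
  shows "\<forall>x\<in>l2 I. x \<noteq> (\<lambda>n. 0) \<longrightarrow> cyclic I \<alpha> x"
proof (intro ballI impI, rule ccontr)
  fix x0 assume x0: "x0 \<in> l2 I" and nz: "x0 \<noteq> (\<lambda>n. 0)" and nc: "\<not> cyclic I \<alpha> x0"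
  obtain y \<epsilon> where y: "y \<in> l2 I" and eps: "\<epsilon> > 0"
    and far: "\<And>a. a \<in> gen_alg I \<alpha> \<Longrightarrow> \<epsilon> \<le> norm_l2 (\<lambda>n. a x0 n - y n)"
    using nc unfolding cyclic_def by (meson not_le)
  have la: "a x0 \<in> l2 I" if "a \<in> gen_alg I \<alpha>" for a by (rule gen_l2[OF that x0])
  define S where "S = {mk_ell2 (a x0) | a. a \<in> gen_alg I \<alpha>}"
  have mem: "mk_ell2 (f x0) \<in> S" if "f \<in> gen_alg I \<alpha>" for f unfolding S_def using that by blast
  have S0: "0 \<in> S"
  proof -
    have "(\<lambda>x n. 0 * id x n) \<in> gen_alg I \<alpha>" by (intro gen_alg.alg_scale gen_alg.alg_id)
    moreover have "mk_ell2 ((\<lambda>x n. 0 * id x n) x0) = 0" by (simp add: mk_zero)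
    ultimately show ?thesis using mem by metis
  qed
  have Sadd: "u + v \<in> S" if uvS: "u \<in> S" "v \<in> S" for u v
  proof -
    obtain a b where a: "a \<in> gen_alg I \<alpha>" "u = mk_ell2 (a x0)" and b: "b \<in> gen_alg I \<alpha>" "v = mk_ell2 (b x0)"
      using uvS unfolding S_def by blast
    have "(\<lambda>x n. a x n + b x n) \<in> gen_alg I \<alpha>" by (rule gen_alg.alg_add[OF a(1) b(1)])
    moreover have "mk_ell2 ((\<lambda>x n. a x n + b x n) x0) = u + v"
    proof -
      have "(\<lambda>n. a x0 n + b x0 n) = vec_of (u + v)"
        using l2_imp[OF la[OF a(1)]] l2_imp[OF la[OF b(1)]] a(2) b(2) by (simp add: fun_eq_iff)
      thus ?thesis by simp
    qed
    ultimately show ?thesis using mem by metis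
  qed
  have Ssc: "csc c u \<in> S" if uS: "u \<in> S" for c u
  proof -
    obtain a where a: "a \<in> gen_alg I \<alpha>" "u = mk_ell2 (a x0)" using uS unfolding S_def by blast
    have "(\<lambda>x n. c * a x n) \<in> gen_alg I \<alpha>" by (rule gen_alg.alg_scale[OF a(1)])
    moreover have "mk_ell2 ((\<lambda>x n. c * a x n) x0) = csc c u"
    proof -
      have "(\<lambda>n. c * a x0 n) = vec_of (csc c u)"
        using l2_imp[OF la[OF a(1)]] a(2) by (simp add: fun_eq_iff)
      thus ?thesis by simp
    qed
    ultimately show ?thesis using mem by metis
  qed
  have farS: "\<epsilon> \<le> norm (s - mk_ell2 y)" if sS: "s \<in> S" for s
  proof -
    obtain a where a: "a \<in> gen_alg I \<alpha>" "s = mk_ell2 (a x0)" using sS unfolding S_def by blast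
    have "norm_l2 (\<lambda>n. a x0 n - y n) = norm (mk_ell2 (a x0) - mk_ell2 y)"
      using l2_imp[OF la[OF a(1)]] l2_imp[OF y] by (metis diff_vec norm_l2_vec)
    thus ?thesis using far[OF a(1)] a(2) by simp
  qed
  obtain w where wnz: "w \<noteq> 0" and worth: "\<forall>s\<in>S. cinn w s = 0"
    and wco: "\<forall>n. (\<forall>s\<in>S. vec_of s n = 0) \<longrightarrow> vec_of (mk_ell2 y) n = 0 \<longrightarrow> vec_of w n = 0"
    using orth_vector[OF S0 Sadd Ssc farS eps] by blast
  have wV: "w \<in> VI I"
  proof -
    { fix n assume n: "n \<notin> I"
      have "\<forall>s\<in>S. vec_of s n = 0"
      proof
        fix s assume "s \<in> S"
        then obtain a where a: "a \<in> gen_alg I \<alpha>" "s = mk_ell2 (a x0)" unfolding S_def by blast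
        show "vec_of s n = 0" using l2_VI[OF la[OF a(1)]] n a(2) by (simp add: VI_def)
      qed
      moreover have "vec_of (mk_ell2 y) n = 0" using l2_VI[OF y] n by (simp add: VI_def)
      ultimately have "vec_of w n = 0" using wco by blast }
    thus ?thesis by (simp add: VI_def)
  qed
  define A0 :: op where "A0 = (\<lambda>x n. inner_l2 (vec_of w) x * vec_of w n)"
  have A0eq: "A0 x = vec_of (rk w (mk_ell2 x))" if "x \<in> l2 I" for x
  proof -
    have "inner_l2 (vec_of w) x = cinn w (mk_ell2 x)"
      using l2_imp[OF that] inner_l2_vec[of w "mk_ell2 x"] by simp
    thus ?thesis by (simp add: A0_def rk_def fun_eq_iff)
  qed
  have rkV: "rk w u \<in> VI I" for u by (simp add: rk_def VI_csc[OF wV])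
  have A0b: "bounded_op I A0"
    unfolding bounded_op_def
  proof (intro conjI ballI allI exI)
    fix x assume x: "x \<in> l2 I"
    show "A0 x \<in> l2 I" unfolding A0eq[OF x] by (rule VI_l2[OF rkV])
    show "norm_l2 (A0 x) \<le> (norm w)\<^sup>2 * norm_l2 x"
      using norm_rk[of w "mk_ell2 x"] l2_imp[OF x] by (metis A0eq[OF x] norm_l2_vec)
  next
    fix x y a b assume x: "x \<in> l2 I" and y: "y \<in> l2 I"
    define X where "X = mk_ell2 x"
    define Y where "Y = mk_ell2 y"
    have e: "(\<lambda>n. a * x n + b * y n) = vec_of (csc a X + csc b Y)"
      using l2_imp[OF x] l2_imp[OF y] by (simp add: X_def Y_def fun_eq_iff)
    have l: "(\<lambda>n. a * x n + b * y n) \<in> l2 I" unfolding e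
      by (intro VI_l2 VI_add VI_csc) (simp_all add: X_def Y_def l2_VI x y)
    have "A0 (\<lambda>n. a * x n + b * y n) = vec_of (rk w (csc a X + csc b Y))"
      using A0eq[OF l] by (simp add: e)
    also have "\<dots> = vec_of (csc a (rk w X) + csc b (rk w Y))" by (simp add: rk_add rk_csc)
    also have "\<dots> = (\<lambda>n. a * A0 x n + b * A0 y n)"
      by (simp add: A0eq[OF x] A0eq[OF y] X_def Y_def fun_eq_iff)
    finally show "A0 (\<lambda>n. a * x n + b * y n) = (\<lambda>n. a * A0 x n + b * A0 y n)" .
  qed
  have A0p: "positive_op I A0"
    unfolding positive_op_def
  proof (intro ballI conjI)
    fix x assume x: "x \<in> l2 I"
    have "inner_l2 x (A0 x) = cinn (mk_ell2 x) (rk w (mk_ell2 x))"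
      using l2_imp[OF x] A0eq[OF x] inner_l2_vec by metis
    also have "\<dots> = complex_of_real ((cmod (cinn w (mk_ell2 x)))\<^sup>2)" by (rule cinn_rk_self)
    finally have e: "inner_l2 x (A0 x) = complex_of_real ((cmod (cinn w (mk_ell2 x)))\<^sup>2)" .
    show "inner_l2 x (A0 x) \<in> \<real>" unfolding e by simp
    show "0 \<le> Re (inner_l2 x (A0 x))" unfolding e by simp
  qed
  have A0s: "summable (\<lambda>n. if n \<in> I then Re (inner_l2 (ket n) (A0 (ket n))) else 0)"
  proof (rule summable_comparison_test'[where g="\<lambda>n. (cmod (vec_of w n))\<^sup>2" and N=0])
    show "summable (\<lambda>n. (cmod (vec_of w n))\<^sup>2)" by simp
    fix n :: nat
    show "norm (if n \<in> I then Re (inner_l2 (ket n) (A0 (ket n))) else 0) \<le> (cmod (vec_of w n))\<^sup>2"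
    proof (cases "n \<in> I")
      case True
      have kl: "ket n \<in> l2 I" unfolding ket_kt using True by (intro VI_l2) (auto simp: VI_def vec_of_kt)
      have "inner_l2 (ket n) (A0 (ket n)) = cinn (kt n) (rk w (kt n))"
        using A0eq[OF kl] by (simp add: ket_kt inner_l2_vec)
      also have "\<dots> = complex_of_real ((cmod (vec_of w n))\<^sup>2)" by (simp add: cinn_rk_self)
      finally show ?thesis using True by simp
    qed simp
  qed
  have A0C: "C1 I A0" using A0b A0p A0s by (simp add: C1_def)
  have A0nz: "\<exists>x\<in>l2 I. A0 x \<noteq> (\<lambda>n. 0)"
  proof
    show wl: "vec_of w \<in> l2 I" by (rule VI_l2[OF wV])
    have "rk w w = csc (complex_of_real ((norm w)\<^sup>2)) w" by (simp add: rk_def cinn_self)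
    moreover have "csc (complex_of_real ((norm w)\<^sup>2)) w \<noteq> 0"
    proof
      assume "csc (complex_of_real ((norm w)\<^sup>2)) w = 0"
      hence "csc (inverse (complex_of_real ((norm w)\<^sup>2))) (csc (complex_of_real ((norm w)\<^sup>2)) w) = 0" by simp
      thus False using wnz by simp
    qed
    ultimately have "rk w w \<noteq> 0" by simp
    hence "vec_of (rk w w) \<noteq> vec_of 0" using vec_of_inject by blast
    thus "A0 (vec_of w) \<noteq> (\<lambda>n. 0)" using A0eq[OF wl] by simp
  qed
  obtain t where t: "t > 0" and sp: "strictly_positive_op I (exp_kraus I \<alpha> t A0)"
    using erg A0C A0nz unfolding ergodic_def by blast
  define K0 where "K0 = {a x0 | a. a \<in> gen_alg I \<alpha>}"
  have memK: "f x0 \<in> K0" if "f \<in> gen_alg I \<alpha>" for f unfolding K0_def using that by blast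
  have x0K: "x0 \<in> K0" using memK[OF gen_alg.alg_id] by simp
  have adjK: "adj I (\<alpha> i) z \<in> K0" if zK: "z \<in> K0" for i z
  proof -
    obtain a where a: "a \<in> gen_alg I \<alpha>" "z = a x0" using zK unfolding K0_def by blast
    have "adj I (\<alpha> i) \<circ> a \<in> gen_alg I \<alpha>" by (intro gen_alg.alg_mult gen_alg.alg_gen a(1))
    thus ?thesis using memK a(2) by fastforce
  qed
  have Qk: "\<forall>z\<in>K0. (kraus I \<alpha> ^^ k) A0 z = (\<lambda>n. 0)" for k
  proof (induction k)
    case 0
    show ?case
    proof
      fix z assume "z \<in> K0"
      then obtain a where a: "a \<in> gen_alg I \<alpha>" "z = a x0" unfolding K0_def by blast
      have "mk_ell2 z \<in> S" unfolding S_def using a by blast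
      hence "cinn w (mk_ell2 z) = 0" using worth by blast
      moreover have "inner_l2 (vec_of w) z = cinn w (mk_ell2 z)"
        using l2_imp[OF la[OF a(1)]] inner_l2_vec[of w "mk_ell2 z"] a(2) by simp
      ultimately show "(kraus I \<alpha> ^^ 0) A0 z = (\<lambda>n. 0)" by (simp add: A0_def)
    qed
  next
    case (Suc k)
    show ?case
    proof
      fix z assume z: "z \<in> K0"
      have z0: "\<alpha> i ((kraus I \<alpha> ^^ k) A0 (adj I (\<alpha> i) z)) = (\<lambda>n. 0)" for i
        using Suc adjK[OF z] bop_zero[OF bdd] by simp
      have "kraus I \<alpha> ((kraus I \<alpha> ^^ k) A0) z = vec_of 0"
        apply (subst kraus_def[of I \<alpha> "(kraus I \<alpha> ^^ k) A0"])
        by (rule op_lim_eq[where F="\<lambda>N. 0"]) (simp_all add: z0 VI_zero)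
      thus "(kraus I \<alpha> ^^ Suc k) A0 z = (\<lambda>n. 0)" by simp
    qed
  qed
  have "exp_kraus I \<alpha> t A0 x0 = vec_of 0"
    unfolding exp_kraus_def
    by (rule op_lim_eq[where F="\<lambda>N. 0"]) (use Qk x0K in \<open>simp_all add: VI_zero\<close>)
  hence "inner_l2 x0 (exp_kraus I \<alpha> t A0 x0) = 0" by (simp add: inner_l2_def)
  moreover have "0 < Re (inner_l2 x0 (exp_kraus I \<alpha> t A0 x0))"
    using sp x0 nz unfolding strictly_positive_op_def by blast
  ultimately show False by simp
qed


end

theorem lemma3p4:
  fixes I :: "nat set" and \<alpha> :: "nat \<Rightarrow> op"
  assumes bdd: "\<And>i. bounded_op I (\<alpha> i)"
    and kraus_bound: "\<exists>c::real. \<forall>K. finite K \<longrightarrow>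
           positive_op I (\<lambda>x n. complex_of_real c * x n - (\<Sum>i\<in>K. adj I (\<alpha> i) (\<alpha> i x) n))"
  shows "ergodic I \<alpha> \<longleftrightarrow> (\<forall>x\<in>l2 I. x \<noteq> (\<lambda>n. 0) \<longrightarrow> cyclic I \<alpha> x)"
proof -
  obtain c where c: "\<forall>K. finite K \<longrightarrow>
           positive_op I (\<lambda>x n. complex_of_real c * x n - (\<Sum>i\<in>K. adj I (\<alpha> i) (\<alpha> i x) n))"
    using kraus_bound by blast
  interpret R: rawset I \<alpha> c
    by unfold_locales (use bdd c in auto)
  show ?thesis using R.if_dir R.only_if_dir by blast
qed


end
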